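(* $\{M^{(1)}_n\}$ and $\{M^{(2)}_n\}$ are martingale difference sequences with respect to the increasing $\sigma$-fields $\mathcal F_n:=\sigma(x_m,y_m,M^{(1)}_{m},M^{(2)}_{m},m\le n)$, $n\ge0$, and there exist constants $K^{(1)},K^{(2)}>0$ such that for all $n\ge0$: $\mathbb E[\|M^{(1)}_{n+1}\|_2^2\mid\mathcal F_n]\le K^{(1)}(1+\|x_n\|_2^2+\|y_n\|_2^2)$ and $\mathbb E[\|M^{(2)}_{n+1}\|_2^2\mid\mathcal F_n]\le K^{(2)}(1+\|x_n\|_2^2+\|y_n\|_2^2)$.
   Context: $\mathcal S,\mathcal A$ finite, $P$ a transition kernel, $r$ a reward with $|r|\le\bar r$, $T\ge1$, $\Omega=\mathcal S$, $\mathcal S^{\mathrm{de}}=\{0,\dots,T-1\}$ with cyclic deterministic kernel $P^{\mathrm{de}}$, $\mathcal S^{\mathrm h}=\mathcal S$, $\mathcal S^{\mathrm l}=\mathcal S\times\Omega\times\mathcal S^{\mathrm{de}}$, bounded $r^{\mathrm l}$, $\gamma^{\mathrm h},\gamma^{\mathrm l}\in(0,1)$. High-level kernel $P^{\mathrm h}_{\pi^{\mathrm l}}(s'|s,\omega)=\sum_{s_1..s_{T-1},a_0..a_{T-1}}\prod_{i=1}^TP(s_i|s_{i-1},a_{i-1})\pi^{\mathrm l}(a_{i-1}|(s_{i-1},\omega,i-1))$ ($s_0=s,s_T=s'$), high-level reward $r^{\mathrm h}_{\pi^{\mathrm l}}(s,\omega)=\mathbb E[\sum_{k=0}^{T-1}(\gamma^{\mathrm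 h})^kr(s_k,a_k)|s_0=s]$ with $a_k\sim\pi^{\mathrm l}(\cdot|(s_k,\omega,k))$; low-level kernel $P^{\mathrm l}_{\pi^{\mathrm h}}((s',\omega',d')|(s,\omega,d),a)=P^{\mathrm{de}}(d'|d)P(s'|s,a)q$, $q=0$ if $d\ne T-1,\omega'\ne\omega$; $q=1$ if $d\ne T-1,\omega'=\omega$; $q=\pi^{\mathrm h}(\omega'|s)$ if $d=T-1$. Feudal Q-learning iterates $Q^{\mathrm h,n}$, $Q^{\mathrm l,n}$ are written as $y_n=\mathrm{vec}(Q^{\mathrm h,n})$, $x_n=\mathrm{vec}(Q^{\mathrm l,n})$ and updated from on-policy samples generated with $\pi^{\mathrm h}=\pi^{\mathrm h,n}$, $\pi^{\mathrm l}=\pi^{\mathrm l,n}$ (policies determined by the current iterates). The noise terms are vectors with components $M^{(1)}_{n+1,s^{\mathrm l},a}=\gamma^{\mathrm l}\max_{a'}Q^{\mathrm l,n}(s^{\mathrm l}_{k+1},a')-\gamma^{\mathrm l}\mathbb E_{s^{\mathrm l,+}\sim P^{\mathrm l}_{\pi^{\mathrm h}}(\cdot|s^{\mathrm l},a)}[\max_{a^+}Q^{\mathrm l,n}(s^{\mathrm l,+},a^+)]$, with $s^{\mathrm l}_{k+1}\sim P^{\mathrm l}_{\pi^{\mathrm h}}(\cdot|s^{\mathrm l},a)$, and $M^{(2)}_{n+1,s^{\mathrm h},\omega}=(\gamma^{\mathrm h})^T\max_{\omega'}Q^{\mathrm h,n}(s^{\mathrm h}_{t+1},\omega')-(\gamma^{\mathrm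 h})^T\mathbb E_{s^{\mathrm h,+}\sim P^{\mathrm h}_{\pi^{\mathrm l}}(\cdot|s^{\mathrm h},\omega)}[\max_{\omega^+}Q^{\mathrm h,n}(s^{\mathrm h,+},\omega^+)]+\sum_{k=0}^{T-1}(\gamma^{\mathrm h})^kr(s_{tT+k},a_{tT+k})-r^{\mathrm h}_{\pi^{\mathrm l}}(s^{\mathrm h},\omega)$, where the sampled segment starts at $s_{tT}=s^{\mathrm h}$ with goal $\omega$, $a_{tT+k}\sim\pi^{\mathrm l}(\cdot|s^{\mathrm l}_{tT+k})$, $s^{\mathrm l}_{tT+k+1}\sim P^{\mathrm l}_{\pi^{\mathrm h}}(\cdot|s^{\mathrm l}_{tT+k},a_{tT+k})$, and $s^{\mathrm h}_{t+1}=s_{(t+1)T}$. *)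

theory Defs
  imports "HOL-Probability.Probability"
begin

text \<open>States 's, actions 'a (finite types); goals \<Omega> = 's;
  decision-time states {0..<T}; low-level states ('s \<times> 's \<times> nat) with d < T.
  A kernel P is written P s a s' = P(s'|s,a); a policy pi s w = pi(w|s).\<close>

definition Sl :: "nat \<Rightarrow> ('s \<times> 's \<times> nat) set" where
  "Sl T = UNIV \<times> UNIV \<times> {..<T}"

definition Pde :: "nat \<Rightarrow> nat \<Rightarrow> nat \<Rightarrow> real" where
  "Pde T d d' = (if d' = Suc d mod T then 1 else 0)"

definition Pl :: "nat \<Rightarrow> ('s \<Rightarrow> 'a \<Rightarrow> 's \<Rightarrow> real) \<Rightarrow> ('s \<Rightarrow> 's \<Rightarrow> real)
    \<Rightarrow> ('s \<times> 's \<times> nat) \<Rightarrow> 'a \<Rightarrow> ('s \<times> 's \<times> nat) \<Rightarrow> real" where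
  "Pl T P pih sl a sl' = (case sl of (s, w, d) \<Rightarrow> case sl' of (s', w', d') \<Rightarrow>
     Pde T d d' * P s a s' *
     (if d \<noteq> T - 1 then (if w' = w then 1 else 0) else pih s w'))"

text \<open>Paths of one high-level segment: states s_0..s_T and actions a_0..a_{T-1}.\<close>
definition seg_prob :: "nat \<Rightarrow> ('s \<Rightarrow> 'a \<Rightarrow> 's \<Rightarrow> real) \<Rightarrow> ('s \<times> 's \<times> nat \<Rightarrow> 'a \<Rightarrow> real)
    \<Rightarrow> 's \<Rightarrow> (nat \<Rightarrow> 's) \<Rightarrow> (nat \<Rightarrow> 'a) \<Rightarrow> real" where
  "seg_prob T P pil w ss as =
     (\<Prod>i\<in>{1..T}. P (ss (i - 1)) (as (i - 1)) (ss i) * pil (ss (i - 1), w, i - 1) (as (i - 1)))"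

definition seg_states :: "nat \<Rightarrow> 's \<Rightarrow> (nat \<Rightarrow> 's) set" where
  "seg_states T s = {ss \<in> PiE {..T} (\<lambda>_. UNIV). ss 0 = s}"

definition seg_actions :: "nat \<Rightarrow> (nat \<Rightarrow> 'a) set" where
  "seg_actions T = PiE {..<T} (\<lambda>_. UNIV)"

definition Ph :: "nat \<Rightarrow> ('s \<Rightarrow> 'a \<Rightarrow> 's \<Rightarrow> real) \<Rightarrow> ('s \<times> 's \<times> nat \<Rightarrow> 'a \<Rightarrow> real)
    \<Rightarrow> 's \<Rightarrow> 's \<Rightarrow> 's \<Rightarrow> real" where
  "Ph T P pil s w s' =
     (\<Sum>ss\<in>{ss \<in> seg_states T s. ss T = s'}. \<Sum>as\<in>seg_actions T. seg_prob T P pil w ss as)"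

definition rh :: "nat \<Rightarrow> real \<Rightarrow> ('s \<Rightarrow> 'a \<Rightarrow> 's \<Rightarrow> real) \<Rightarrow> ('s \<Rightarrow> 'a \<Rightarrow> real)
    \<Rightarrow> ('s \<times> 's \<times> nat \<Rightarrow> 'a \<Rightarrow> real) \<Rightarrow> 's \<Rightarrow> 's \<Rightarrow> real" where
  "rh T gh P r pil s w =
     (\<Sum>ss\<in>seg_states T s. \<Sum>as\<in>seg_actions T.
        seg_prob T P pil w ss as * (\<Sum>k<T. gh ^ k * r (ss k) (as k)))"

definition maxQ :: "('x \<Rightarrow> 'y::finite \<Rightarrow> real) \<Rightarrow> 'x \<Rightarrow> real" where
  "maxQ Q x = Max (range (Q x))"

definition sqnorm_l :: "nat \<Rightarrow> ('s::finite \<times> 's \<times> nat \<Rightarrow> 'a::finite \<Rightarrow> real) \<Rightarrow> real" where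
  "sqnorm_l T Q = (\<Sum>sl\<in>Sl T. \<Sum>a\<in>UNIV. (Q sl a)\<^sup>2)"

definition sqnorm_h :: "('s::finite \<Rightarrow> 's \<Rightarrow> real) \<Rightarrow> real" where
  "sqnorm_h Q = (\<Sum>s\<in>UNIV. \<Sum>w\<in>UNIV. (Q s w)\<^sup>2)"

text \<open>Noise M^{(1)}_{n+1} as a function of the iterate Q^{l,n}, the high-level policy
  and the sampled next low-level states (one per component).\<close>
definition noise1 :: "nat \<Rightarrow> real \<Rightarrow> ('s \<Rightarrow> 'a \<Rightarrow> 's \<Rightarrow> real) \<Rightarrow> ('s \<Rightarrow> 's \<Rightarrow> real)
    \<Rightarrow> ('s \<times> 's \<times> nat \<Rightarrow> 'a::finite \<Rightarrow> real) \<Rightarrow> ('s \<times> 's \<times> nat \<Rightarrow> 'a \<Rightarrow> 's \<times> 's \<times> nat)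
    \<Rightarrow> ('s \<times> 's \<times> nat) \<Rightarrow> 'a \<Rightarrow> real" where
  "noise1 T gl P pih Ql nexts sl a =
     gl * maxQ Ql (nexts sl a) - gl * (\<Sum>sp\<in>Sl T. Pl T P pih sl a sp * maxQ Ql sp)"

text \<open>Noise M^{(2)}_{n+1}; segS s w k / segA s w k are the sampled states / actions
  of the segment started at s with goal w.\<close>
definition noise2 :: "nat \<Rightarrow> real \<Rightarrow> ('s::finite \<Rightarrow> 'a \<Rightarrow> 's \<Rightarrow> real) \<Rightarrow> ('s \<Rightarrow> 'a \<Rightarrow> real)
    \<Rightarrow> ('s \<times> 's \<times> nat \<Rightarrow> 'a \<Rightarrow> real) \<Rightarrow> ('s \<Rightarrow> 's \<Rightarrow> real)
    \<Rightarrow> ('s \<Rightarrow> 's \<Rightarrow> nat \<Rightarrow> 's) \<Rightarrow> ('s \<Rightarrow> 's \<Rightarrow> nat \<Rightarrow> 'a) \<Rightarrow> 's \<Rightarrow> 's \<Rightarrow> real" where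
  "noise2 T gh P r pil Qh segS segA s w =
     gh ^ T * maxQ Qh (segS s w T)
     - gh ^ T * (\<Sum>sp\<in>UNIV. Ph T P pil s w sp * maxQ Qh sp)
     + (\<Sum>k<T. gh ^ k * r (segS s w k) (segA s w k))
     - rh T gh P r pil s w"

definition gen_sigma :: "'w measure \<Rightarrow> ('w \<Rightarrow> real) set \<Rightarrow> 'w measure" where
  "gen_sigma M fs = sigma (space M) (\<Union>f\<in>fs. {f -` A \<inter> space M | A. A \<in> sets borel})"

definition QHspace :: "('s \<Rightarrow> 's \<Rightarrow> real) measure" where
  "QHspace = PiM UNIV (\<lambda>_. PiM UNIV (\<lambda>_. borel))"

definition QLspace :: "('s \<times> 's \<times> nat \<Rightarrow> 'a \<Rightarrow> real) measure" where
  "QLspace = PiM UNIV (\<lambda>_. PiM UNIV (\<lambda>_. borel))"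

text \<open>The noise processes along the iteration (index n stands for M_{n+1}).\<close>
definition noiseL where
  "noiseL T gl P Pih Qh Ql smp n \<omega> =
     noise1 T gl P (Pih (Qh n \<omega>) (Ql n \<omega>)) (Ql n \<omega>) (smp n \<omega>)"

definition noiseH where
  "noiseH T gh P r Pil Qh Ql segS segA n \<omega> =
     noise2 T gh P r (Pil (Qh n \<omega>) (Ql n \<omega>)) (Qh n \<omega>) (segS n \<omega>) (segA n \<omega>)"

text \<open>F_n = sigma(x_m, y_m, M^{(1)}_m, M^{(2)}_m, m \<le> n); with the index shift,
  M^{(i)}_m for 1 \<le> m \<le> n is (noise process) at index m-1 < n.\<close>
definition filt :: "'w measure \<Rightarrow> nat \<Rightarrow> (nat \<Rightarrow> 'w \<Rightarrow> 's \<Rightarrow> 's \<Rightarrow> real)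
    \<Rightarrow> (nat \<Rightarrow> 'w \<Rightarrow> 's \<times> 's \<times> nat \<Rightarrow> 'a \<Rightarrow> real)
    \<Rightarrow> (nat \<Rightarrow> 'w \<Rightarrow> 's \<times> 's \<times> nat \<Rightarrow> 'a \<Rightarrow> real)
    \<Rightarrow> (nat \<Rightarrow> 'w \<Rightarrow> 's \<Rightarrow> 's \<Rightarrow> real) \<Rightarrow> nat \<Rightarrow> 'w measure" where
  "filt M T Qh Ql M1 M2 n = gen_sigma M
            ({(\<lambda>\<omega>. Ql m \<omega> sl a) | m sl a. m \<le> n \<and> sl \<in> Sl T}
           \<union> {(\<lambda>\<omega>. Qh m \<omega> s w) | m s w. m \<le> n}
           \<union> {(\<lambda>\<omega>. M1 m \<omega> sl a) | m sl a. m < n \<and> sl \<in> Sl T}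
           \<union> {(\<lambda>\<omega>. M2 m \<omega> s w) | m s w. m < n})"

end

theory Submission
  imports Defs
begin

lemma sfs: assumes "prob_space M" "subalgebra M F" shows "sigma_finite_subalgebra M F"
proof -
  interpret prob_space M by fact
  have "finite_measure_subalgebra M F" by unfold_locales (rule assms(2))
  thus ?thesis by (rule finite_measure_subalgebra_is_sigma_finite)
qed

lemma space_gen_sigma[simp]: "space (gen_sigma M fs) = space M"
  unfolding gen_sigma_def by (rule space_measure_of) auto

lemma sets_gen_sigma: "sets (gen_sigma M fs) = sigma_sets (space M) (\<Union>f\<in>fs. {f -` A \<inter> space M | A. A \<in> sets borel})"
  unfolding gen_sigma_def by (rule sets_measure_of) auto

lemma gen_sigma_meas: "f \<in> fs \<Longrightarrow> f \<in> borel_measurable (gen_sigma M fs)"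
  by (auto simp: measurable_def sets_gen_sigma)

lemma gen_sigma_le: assumes "space N = space M" "\<And>f. f \<in> fs \<Longrightarrow> f \<in> borel_measurable N"
  shows "sets (gen_sigma M fs) \<subseteq> sets N"
  unfolding sets_gen_sigma assms(1)[symmetric]
  using measurable_sets[OF assms(2)] by (intro sigma_sets_le_sets_iff[THEN iffD2]) auto

lemma gen_sigma_mono: "fs \<subseteq> gs \<Longrightarrow> sets (gen_sigma M fs) \<subseteq> sets (gen_sigma M gs)"
  unfolding sets_gen_sigma by (rule sigma_sets_mono') auto

lemma gen_sigma_subalg: "(\<And>f. f \<in> fs \<Longrightarrow> f \<in> borel_measurable M) \<Longrightarrow> subalgebra M (gen_sigma M fs)"
  unfolding subalgebra_def using gen_sigma_le[of M M fs] by auto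

lemma tower0:
  assumes "prob_space M" "subalgebra M H" "subalgebra M F" "sets F \<subseteq> sets H" "integrable M f"
    "AE x in M. real_cond_exp M H f x = 0"
  shows "AE x in M. real_cond_exp M F f x = 0"
proof -
  interpret sigma_finite_subalgebra M F using sfs assms by blast
  have sub: "subalgebra H F" using assms(2,3,4) by (auto simp: subalgebra_def)
  have 1: "AE x in M. real_cond_exp M F (real_cond_exp M H f) x = real_cond_exp M F f x"
    by (rule real_cond_exp_nested_subalg[OF assms(2) sub assms(5)])
  have 2: "AE x in M. real_cond_exp M F (real_cond_exp M H f) x = real_cond_exp M F (\<lambda>_. 0) x"
    by (rule real_cond_exp_cong) (use assms(6) in auto)
  have 3: "AE x in M. real_cond_exp M F (\<lambda>_. 0::real) x = 0"
    by (rule real_cond_exp_F_meas) auto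
  from 1 2 3 show ?thesis by eventually_elim simp
qed

lemma maxQ_attained: fixes Q :: "'x \<Rightarrow> 'y::finite \<Rightarrow> real" shows "\<exists>b. maxQ Q x = Q x b"
proof -
  have "Max (range (Q x)) \<in> range (Q x)" by (rule Max_in) auto
  then obtain b where "Max (range (Q x)) = Q x b" by blast
  then show ?thesis unfolding maxQ_def by blast
qed

lemma abs_maxQ_le: "\<bar>maxQ Q x\<bar> \<le> (\<Sum>b\<in>UNIV. \<bar>Q x b\<bar>)"
proof -
  obtain b where "maxQ Q x = Q x b" using maxQ_attained[of Q x] by blast
  then show ?thesis using member_le_sum[of b UNIV "\<lambda>b. \<bar>Q x b\<bar>"] by auto
qed

lemma maxQ_meas: "(\<And>b. (\<lambda>\<omega>. Q \<omega> x b) \<in> borel_measurable N) \<Longrightarrow> (\<lambda>\<omega>. maxQ (Q \<omega>) x) \<in> borel_measurable N"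
  unfolding maxQ_def by (rule borel_measurable_Max) auto

lemma finite_Sl[simp]: "finite (Sl T :: ('s::finite \<times> 's \<times> nat) set)"
  unfolding Sl_def by auto

lemma maxQ_sq_le_l: assumes "x \<in> Sl T" shows "(maxQ Q x)^2 \<le> sqnorm_l T Q"
proof -
  obtain b where b: "maxQ Q x = Q x b" using maxQ_attained[of Q x] by blast
  have "(Q x b)^2 \<le> (\<Sum>a\<in>UNIV. (Q x a)^2)" by (rule member_le_sum) auto
  also have "\<dots> \<le> (\<Sum>sl\<in>Sl T. \<Sum>a\<in>UNIV. (Q sl a)^2)"
    by (rule member_le_sum[OF assms]) (auto intro: sum_nonneg)
  finally show ?thesis by (simp add: b sqnorm_l_def)
qed

lemma maxQ_sq_le_h: "(maxQ Q x)^2 \<le> sqnorm_h Q"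
proof -
  obtain b where b: "maxQ Q x = Q x b" using maxQ_attained[of Q x] by blast
  have "(Q x b)^2 \<le> (\<Sum>a\<in>UNIV. (Q x a)^2)" by (rule member_le_sum) auto
  also have "\<dots> \<le> (\<Sum>sl\<in>UNIV. \<Sum>a\<in>UNIV. (Q sl a)^2)"
    by (rule member_le_sum) (auto intro: sum_nonneg)
  finally show ?thesis by (simp add: b sqnorm_h_def)
qed

lemma abs_le_sqrt: "(x::real)^2 \<le> y \<Longrightarrow> \<bar>x\<bar> \<le> sqrt y"
  by (metis real_sqrt_abs real_sqrt_le_mono)

lemma sqnorm_l_nonneg: "sqnorm_l T Q \<ge> 0" unfolding sqnorm_l_def by (auto intro!: sum_nonneg)
lemma sqnorm_h_nonneg: "sqnorm_h Q \<ge> 0" unfolding sqnorm_h_def by (auto intro!: sum_nonneg)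

lemma le_one_of_sum: fixes f :: "'x::finite \<Rightarrow> real"
  assumes "\<And>x. f x \<ge> 0" "(\<Sum>x\<in>UNIV. f x) = 1" shows "f y \<le> 1"
  using member_le_sum[of y UNIV f] assms by auto

lemma Pde_01: "Pde T d d' \<ge> 0" "Pde T d d' \<le> 1" unfolding Pde_def by auto

lemma Pl_zero: assumes "T \<ge> 1" "sp \<notin> Sl T" shows "Pl T P pih sl a sp = 0"
proof -
  obtain s w d where sl: "sl = (s,w,d)" by (cases sl) auto
  obtain s' w' d' where sp: "sp = (s',w',d')" by (cases sp) auto
  have "d' \<ge> T" using assms(2) by (auto simp: sp Sl_def)
  moreover have "Suc d mod T < T" using assms(1) by auto
  ultimately have "Pde T d d' = 0" unfolding Pde_def by auto
  then show ?thesis by (simp add: Pl_def sl sp)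
qed

lemma Pl_01: assumes "\<And>s a s'. P s a s' \<ge> 0" "\<And>s a s'. P s a s' \<le> 1"
  "\<And>s w. pih s w \<ge> 0" "\<And>s w. pih s w \<le> 1"
  shows "Pl T P pih sl a sp \<ge> 0" "Pl T P pih sl a sp \<le> 1"
proof -
  obtain s w d where sl: "sl = (s,w,d)" by (cases sl) auto
  obtain s' w' d' where sp: "sp = (s',w',d')" by (cases sp) auto
  let ?q = "(if d \<noteq> T - 1 then (if w' = w then 1 else 0) else pih s w')"
  have q: "?q \<ge> 0" "?q \<le> 1" using assms(3,4) by auto
  have "Pde T d d' * P s a s' * ?q \<ge> 0" using Pde_01 assms(1) q by auto
  then show "Pl T P pih sl a sp \<ge> 0" by (simp add: Pl_def sl sp)
  have "Pde T d d' * P s a s' * ?q \<le> 1 * 1 * 1"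
    using Pde_01 assms(1,2) q by (intro mult_mono) auto
  then show "Pl T P pih sl a sp \<le> 1" by (simp add: Pl_def sl sp)
qed

lemma seg_prob_01: assumes "\<And>s a s'. P s a s' \<ge> 0" "\<And>s a s'. P s a s' \<le> 1"
  "\<And>x b. pil x b \<ge> 0" "\<And>x b. pil x b \<le> 1"
  shows "seg_prob T P pil w ss as \<ge> 0" "seg_prob T P pil w ss as \<le> 1"
  unfolding seg_prob_def using assms
  by (auto intro!: prod_nonneg prod_le_1 mult_le_one)

lemma comp2: fixes g :: "'w \<Rightarrow> 'x \<Rightarrow> 'y \<Rightarrow> real"
  assumes g: "g \<in> measurable N (PiM UNIV (\<lambda>_. PiM UNIV (\<lambda>_. borel)))"
  shows "(\<lambda>\<omega>. g \<omega> x y) \<in> borel_measurable N"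
proof -
  have a: "(\<lambda>q. q x) \<in> measurable (PiM UNIV (\<lambda>_. PiM UNIV (\<lambda>_. borel))) (PiM UNIV (\<lambda>_. (borel::real measure)))"
    by (rule measurable_component_singleton) simp
  have b: "(\<lambda>q. q y) \<in> measurable (PiM UNIV (\<lambda>_. (borel::real measure))) borel"
    by (rule measurable_component_singleton) simp
  show ?thesis using measurable_compose[OF measurable_compose[OF g a] b] by simp
qed

lemma mk2: fixes g :: "'w \<Rightarrow> 'x \<Rightarrow> 'y \<Rightarrow> real"
  assumes "\<And>x y. (\<lambda>\<omega>. g \<omega> x y) \<in> borel_measurable N"
  shows "g \<in> measurable N (PiM UNIV (\<lambda>_. PiM UNIV (\<lambda>_. borel)))"
proof -
  have "(\<lambda>\<omega> x. g \<omega> x) \<in> measurable N (PiM UNIV (\<lambda>_. PiM UNIV (\<lambda>_. borel)))"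
    apply (rule measurable_PiM_single')
     apply (rule measurable_PiM_single')
    using assms by (auto simp: space_PiM PiE_def extensional_def)
  then show ?thesis by simp
qed

lemma pol_meas:
  fixes Pi :: "('s \<Rightarrow> 's \<Rightarrow> real) \<Rightarrow> ('s \<times> 's \<times> nat \<Rightarrow> 'a \<Rightarrow> real) \<Rightarrow> 'x \<Rightarrow> 'y \<Rightarrow> real"
  assumes Pm: "(\<lambda>q. Pi (fst q) (snd q)) \<in> measurable (QHspace \<Otimes>\<^sub>M QLspace) (PiM UNIV (\<lambda>_. PiM UNIV (\<lambda>_. borel)))"
    and qh: "\<And>s w. (\<lambda>\<omega>. qh \<omega> s w) \<in> borel_measurable N"
    and ql: "\<And>sl a. (\<lambda>\<omega>. ql \<omega> sl a) \<in> borel_measurable N"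
  shows "(\<lambda>\<omega>. Pi (qh \<omega>) (ql \<omega>) x y) \<in> borel_measurable N"
proof -
  have 1: "qh \<in> measurable N QHspace" unfolding QHspace_def by (rule mk2[OF qh])
  have 2: "ql \<in> measurable N QLspace" unfolding QLspace_def by (rule mk2[OF ql])
  have "(\<lambda>\<omega>. (qh \<omega>, ql \<omega>)) \<in> measurable N (QHspace \<Otimes>\<^sub>M QLspace)"
    using 1 2 by (rule measurable_Pair)
  from measurable_compose[OF this Pm]
  have "(\<lambda>\<omega>. Pi (qh \<omega>) (ql \<omega>)) \<in> measurable N (PiM UNIV (\<lambda>_. PiM UNIV (\<lambda>_. borel)))" by simp
  then show ?thesis by (rule comp2)
qed

lemma Pl_meas: assumes "\<And>s w. (\<lambda>\<omega>. pih \<omega> s w) \<in> borel_measurable N"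
  shows "(\<lambda>\<omega>. Pl T P (pih \<omega>) sl a sp) \<in> borel_measurable N"
proof -
  obtain s w d where sl: "sl = (s,w,d)" by (cases sl) auto
  obtain s' w' d' where sp: "sp = (s',w',d')" by (cases sp) auto
  show ?thesis unfolding sl sp Pl_def using assms by simp
qed

lemma sub_sub: "subalgebra M A \<Longrightarrow> subalgebra M B \<Longrightarrow> sets A \<subseteq> sets B \<Longrightarrow> subalgebra B A"
  by (auto simp: subalgebra_def)

lemma pred_E: fixes sS :: "'w \<Rightarrow> nat \<Rightarrow> 's::finite" and sA :: "'w \<Rightarrow> nat \<Rightarrow> 'a::finite"
  assumes sSM: "\<And>k. (\<lambda>\<omega>. sS \<omega> k) \<in> measurable M (count_space UNIV)"
    and sAM: "\<And>k. (\<lambda>\<omega>. sA \<omega> k) \<in> measurable M (count_space UNIV)"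
  shows "(\<lambda>\<omega>. if (\<forall>k\<le>T. sS \<omega> k = ss k) \<and> (\<forall>k<T. sA \<omega> k = as k) then 1 else 0 :: real) \<in> borel_measurable M"
proof -
  have 1: "Measurable.pred M (\<lambda>\<omega>. sS \<omega> k = ss k)" for k by (rule pred_count_space_const1[OF sSM])
  have 2: "Measurable.pred M (\<lambda>\<omega>. sA \<omega> k = as k)" for k by (rule pred_count_space_const1[OF sAM])
  have "Measurable.pred M (\<lambda>\<omega>. (\<forall>k\<in>{..T}. sS \<omega> k = ss k) \<and> (\<forall>k\<in>{..<T}. sA \<omega> k = as k))"
    by (rule pred_intros_logic(3); rule pred_intros_finite(3)) (auto intro: 1 2)
  then have "Measurable.pred M (\<lambda>\<omega>. (\<forall>k\<le>T. sS \<omega> k = ss k) \<and> (\<forall>k<T. sA \<omega> k = as k))"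
    by (simp only: Ball_def atMost_iff lessThan_iff)
  then have "{\<omega> \<in> space M. (\<forall>k\<le>T. sS \<omega> k = ss k) \<and> (\<forall>k<T. sA \<omega> k = as k)} \<in> sets M"
    by (simp only: pred_def)
  then show ?thesis by (rule measurable_If[rotated 2]) simp_all
qed

lemma L_eq_gen:
  fixes sS :: "'w \<Rightarrow> nat \<Rightarrow> 's::finite" and sA :: "'w \<Rightarrow> nat \<Rightarrow> 'a::finite"
    and F :: "'w \<Rightarrow> (nat \<Rightarrow> 's) \<Rightarrow> (nat \<Rightarrow> 'a) \<Rightarrow> real"
  assumes Fcong: "\<And>ss as. (\<forall>k\<le>T. ss k = sS \<omega> k) \<Longrightarrow> (\<forall>k<T. as k = sA \<omega> k) \<Longrightarrow> F \<omega> ss as = F \<omega> (sS \<omega>) (sA \<omega>)"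
  shows "F \<omega> (sS \<omega>) (sA \<omega>) = (\<Sum>p\<in>PiE {..T} (\<lambda>_. UNIV) \<times> PiE {..<T} (\<lambda>_. UNIV).
      F \<omega> (fst p) (snd p) * indicator {\<omega>. (\<forall>k\<le>T. sS \<omega> k = fst p k) \<and> (\<forall>k<T. sA \<omega> k = snd p k)} \<omega>)"
proof -
  let ?SS = "PiE {..T} (\<lambda>_. UNIV :: 's set)"
  let ?AS = "PiE {..<T} (\<lambda>_. UNIV :: 'a set)"
  define ss0 where "ss0 = restrict (sS \<omega>) {..T}"
  define as0 where "as0 = restrict (sA \<omega>) {..<T}"
  have mem: "(ss0, as0) \<in> ?SS \<times> ?AS" unfolding ss0_def as0_def by auto
  have iff: "((\<forall>k\<le>T. sS \<omega> k = ss k) \<and> (\<forall>k<T. sA \<omega> k = as k)) = ((ss, as) = (ss0, as0))"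
    if "(ss, as) \<in> ?SS \<times> ?AS" for ss as
  proof
    assume e: "(\<forall>k\<le>T. sS \<omega> k = ss k) \<and> (\<forall>k<T. sA \<omega> k = as k)"
    have "ss = ss0"
    proof
      fix k show "ss k = ss0 k"
      proof (cases "k \<le> T")
        case True then show ?thesis using e by (simp add: ss0_def)
      next
        case False
        then have "k \<notin> {..T}" by simp
        then show ?thesis using that PiE_arb[of ss "{..T}" "\<lambda>_. UNIV" k] by (simp add: ss0_def)
      qed
    qed
    moreover have "as = as0"
    proof
      fix k show "as k = as0 k"
      proof (cases "k < T")
        case True then show ?thesis using e by (simp add: as0_def)
      next
        case False
        then have "k \<notin> {..<T}" by simp
        then show ?thesis using that PiE_arb[of as "{..<T}" "\<lambda>_. UNIV" k] by (simp add: as0_def)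
      qed
    qed
    ultimately show "(ss, as) = (ss0, as0)" by simp
  next
    assume "(ss, as) = (ss0, as0)"
    then show "(\<forall>k\<le>T. sS \<omega> k = ss k) \<and> (\<forall>k<T. sA \<omega> k = as k)" by (simp add: ss0_def as0_def)
  qed
  have "(\<Sum>p\<in>?SS \<times> ?AS. F \<omega> (fst p) (snd p) * indicator {\<omega>. (\<forall>k\<le>T. sS \<omega> k = fst p k) \<and> (\<forall>k<T. sA \<omega> k = snd p k)} \<omega>)
      = (\<Sum>p\<in>?SS \<times> ?AS. if p = (ss0, as0) then F \<omega> ss0 as0 else 0)"
  proof (rule sum.cong[OF refl])
    fix p assume p: "p \<in> ?SS \<times> ?AS"
    obtain ss as where pp: "p = (ss, as)" by (cases p)
    show "F \<omega> (fst p) (snd p) * indicator {\<omega>. (\<forall>k\<le>T. sS \<omega> k = fst p k) \<and> (\<forall>k<T. sA \<omega> k = snd p k)} \<omega>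
      = (if p = (ss0, as0) then F \<omega> ss0 as0 else 0)"
      using iff[of ss as] p unfolding pp indicator_def by auto
  qed
  also have "\<dots> = F \<omega> ss0 as0" using mem by (subst sum.delta) (auto intro!: finite_PiE)
  also have "\<dots> = F \<omega> (sS \<omega>) (sA \<omega>)" by (rule Fcong) (simp_all add: ss0_def as0_def)
  finally show ?thesis by simp
qed


lemma M1_props:
  fixes M Hn Hs :: "'w measure" and ql :: "'w \<Rightarrow> 's::finite \<times> 's \<times> nat \<Rightarrow> 'a::finite \<Rightarrow> real"
    and pih :: "'w \<Rightarrow> 's \<Rightarrow> 's \<Rightarrow> real" and nx :: "'w \<Rightarrow> 's \<times> 's \<times> nat"
    and P :: "'s \<Rightarrow> 'a \<Rightarrow> 's \<Rightarrow> real" and gl :: real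
  assumes prob: "prob_space M" and T: "T \<ge> 1"
    and Hn: "subalgebra M Hn" and Hs: "subalgebra M Hs" and H01: "sets Hn \<subseteq> sets Hs"
    and ql_meas: "\<And>sl b. (\<lambda>\<omega>. ql \<omega> sl b) \<in> borel_measurable Hn"
    and ql_int: "\<And>sl b. integrable M (\<lambda>\<omega>. ql \<omega> sl b)"
    and pih_meas: "\<And>s w. (\<lambda>\<omega>. pih \<omega> s w) \<in> borel_measurable Hn"
    and pih0: "\<And>\<omega> s w. pih \<omega> s w \<ge> 0" and pih1: "\<And>\<omega> s w. pih \<omega> s w \<le> 1"
    and P0: "\<And>s a s'. P s a s' \<ge> 0" and P1: "\<And>s a s'. P s a s' \<le> 1"
    and nx_meas: "nx \<in> measurable Hs (count_space UNIV)"
    and law: "\<And>sp. AE \<omega> in M. real_cond_exp M Hn (indicator {\<omega>. nx \<omega> = sp}) \<omega> = Pl T P (pih \<omega>) sl a sp"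
  defines "g \<equiv> \<lambda>\<omega>. gl * maxQ (ql \<omega>) (nx \<omega>) - gl * (\<Sum>sp\<in>Sl T. Pl T P (pih \<omega>) sl a sp * maxQ (ql \<omega>) sp)"
  shows "g \<in> borel_measurable Hs" "integrable M g" "AE \<omega> in M. real_cond_exp M Hn g \<omega> = 0"
    "AE \<omega> in M. (g \<omega>)^2 \<le> (\<bar>gl\<bar> * (1 + real (card (Sl T :: ('s \<times> 's \<times> nat) set))))^2 * sqnorm_l T (ql \<omega>)"
proof -
  interpret prob_space M by (rule prob)
  interpret S0: sigma_finite_subalgebra M Hn by (rule sfs[OF prob Hn])
  have H10: "subalgebra Hs Hn" by (rule sub_sub[OF Hn Hs H01])
  have mq0: "\<And>x. (\<lambda>\<omega>. maxQ (ql \<omega>) x) \<in> borel_measurable Hn" by (rule maxQ_meas[OF ql_meas])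
  have mqM: "\<And>x. (\<lambda>\<omega>. maxQ (ql \<omega>) x) \<in> borel_measurable M" by (rule measurable_from_subalg[OF Hn mq0])
  have mq1: "\<And>x. (\<lambda>\<omega>. maxQ (ql \<omega>) x) \<in> borel_measurable Hs" by (rule measurable_from_subalg[OF H10 mq0])
  have h1: "(\<lambda>\<omega>. maxQ (ql \<omega>) (nx \<omega>)) \<in> borel_measurable Hs"
    using measurable_compose_countable[where f="\<lambda>i \<omega>. maxQ (ql \<omega>) i", OF mq1 nx_meas] by simp
  have hM: "(\<lambda>\<omega>. maxQ (ql \<omega>) (nx \<omega>)) \<in> borel_measurable M" by (rule measurable_from_subalg[OF Hs h1])
  have nxM: "nx \<in> measurable M (count_space UNIV)" by (rule measurable_from_subalg[OF Hs nx_meas])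
  have Pl0: "\<And>sp. (\<lambda>\<omega>. Pl T P (pih \<omega>) sl a sp) \<in> borel_measurable Hn" by (rule Pl_meas[OF pih_meas])
  note [measurable] = Pl0 mq0 mqM nxM h1 hM
  define S where "S = (\<lambda>\<omega>. \<Sum>sp\<in>Sl T. Pl T P (pih \<omega>) sl a sp * maxQ (ql \<omega>) sp)"
  have S0: "S \<in> borel_measurable Hn" unfolding S_def by measurable
  have SM: "S \<in> borel_measurable M" by (rule measurable_from_subalg[OF Hn S0])
  have S1: "S \<in> borel_measurable Hs" by (rule measurable_from_subalg[OF H10 S0])
  note [measurable] = S0 SM S1
  have g_eq: "g = (\<lambda>\<omega>. gl * maxQ (ql \<omega>) (nx \<omega>) - gl * S \<omega>)" unfolding g_def S_def ..
  show "g \<in> borel_measurable Hs" unfolding g_eq by measurable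
  have gM: "g \<in> borel_measurable M" unfolding g_eq by measurable
  have Pl01: "\<And>\<omega> sp. Pl T P (pih \<omega>) sl a sp \<ge> 0" "\<And>\<omega> sp. Pl T P (pih \<omega>) sl a sp \<le> 1"
    using Pl_01[of P "pih _", OF P0 P1 pih0 pih1] by auto
  have mq_int: "\<And>x. integrable M (\<lambda>\<omega>. maxQ (ql \<omega>) x)"
  proof -
    fix x
    have "integrable M (\<lambda>\<omega>. \<Sum>b\<in>UNIV. \<bar>ql \<omega> x b\<bar>)" using ql_int by auto
    then show "integrable M (\<lambda>\<omega>. maxQ (ql \<omega>) x)"
      by (rule Bochner_Integration.integrable_bound) (auto intro!: order.trans[OF abs_maxQ_le])
  qed
  have S_int: "integrable M S"
    unfolding S_def
  proof (rule Bochner_Integration.integrable_sum)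
    fix sp :: "'s \<times> 's \<times> nat" assume "sp \<in> Sl T"
    show "integrable M (\<lambda>\<omega>. Pl T P (pih \<omega>) sl a sp * maxQ (ql \<omega>) sp)"
    proof (rule Bochner_Integration.integrable_bound[OF mq_int[of sp]])
      show "(\<lambda>\<omega>. Pl T P (pih \<omega>) sl a sp * maxQ (ql \<omega>) sp) \<in> borel_measurable M"
        using measurable_from_subalg[OF Hn Pl0[of sp]] mqM[of sp] by measurable
      show "AE \<omega> in M. norm (Pl T P (pih \<omega>) sl a sp * maxQ (ql \<omega>) sp) \<le> norm (maxQ (ql \<omega>) sp)"
      proof (intro AE_I2)
        fix \<omega>
        show "norm (Pl T P (pih \<omega>) sl a sp * maxQ (ql \<omega>) sp) \<le> norm (maxQ (ql \<omega>) sp)"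
          using Pl01(1)[of \<omega> sp] Pl01(2)[of \<omega> sp] by (simp add: abs_mult mult_left_le_one_le)
      qed
    qed
  qed
  have null: "AE \<omega> in M. nx \<omega> \<noteq> sp" if sp: "sp \<notin> Sl T" for sp
  proof -
    let ?A = "{\<omega> \<in> space M. nx \<omega> = sp}"
    have A: "?A \<in> sets M" by measurable
    have indM: "indicator {\<omega>. nx \<omega> = sp} \<in> borel_measurable M"
    proof -
      have "(\<lambda>\<omega>. indicator {sp} (nx \<omega>) :: real) \<in> borel_measurable M" by measurable
      moreover have "(\<lambda>\<omega>. indicator {sp} (nx \<omega>) :: real) = indicator {\<omega>. nx \<omega> = sp}"
        by (auto simp: indicator_def)
      ultimately show ?thesis by simp
    qed
    have e1: "AE \<omega> in M. real_cond_exp M Hn (indicator ?A) \<omega> = real_cond_exp M Hn (indicator {\<omega>. nx \<omega> = sp}) \<omega>"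
      by (rule S0.real_cond_exp_cong) (auto simp: indicator_def indM A)
    have e2: "AE \<omega> in M. real_cond_exp M Hn (indicator ?A) \<omega> = 0"
      using e1 law[of sp] by eventually_elim (simp add: Pl_zero[OF T sp])
    have intA: "integrable M (indicator ?A :: 'w \<Rightarrow> real)"
      by (intro integrable_real_indicator A) (simp add: less_top[symmetric])
    have "measure M ?A = (\<integral>\<omega>. indicator ?A \<omega> \<partial>M)" using A by simp
    also have "\<dots> = (\<integral>\<omega>. real_cond_exp M Hn (indicator ?A) \<omega> \<partial>M)"
      using S0.real_cond_exp_int(2)[OF intA] by simp
    also have "\<dots> = (\<integral>\<omega>. 0 \<partial>M)"
      by (rule integral_cong_AE) (use e2 in auto)
    finally have "measure M ?A = 0" by simp
    then have "?A \<in> null_sets M" using A by (simp add: emeasure_eq_measure null_sets_def)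
    from AE_not_in[OF this] AE_space show ?thesis by eventually_elim auto
  qed
  have inSl: "AE \<omega> in M. nx \<omega> \<in> Sl T"
  proof -
    have "AE \<omega> in M. \<forall>sp\<in>- Sl T. nx \<omega> \<noteq> sp"
      by (rule AE_ball_countable') (auto intro: null countableI_type)
    then show ?thesis by eventually_elim auto
  qed
  define f where "f = (\<lambda>sp \<omega>. maxQ (ql \<omega>) sp * indicator {\<omega>. nx \<omega> = sp} \<omega>)"
  have fM: "\<And>sp. f sp \<in> borel_measurable M"
  proof -
    fix sp
    have "(\<lambda>\<omega>. maxQ (ql \<omega>) sp * indicator {sp} (nx \<omega>) :: real) \<in> borel_measurable M" by measurable
    moreover have "(\<lambda>\<omega>. maxQ (ql \<omega>) sp * indicator {sp} (nx \<omega>) :: real) = f sp"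
      by (auto simp: indicator_def f_def)
    ultimately show "f sp \<in> borel_measurable M" by simp
  qed
  have f_int: "\<And>sp. integrable M (f sp)"
    by (rule Bochner_Integration.integrable_bound[OF mq_int fM]) (auto simp: f_def indicator_def)
  have h_eq: "AE \<omega> in M. maxQ (ql \<omega>) (nx \<omega>) = (\<Sum>sp\<in>Sl T. f sp \<omega>)"
    using inSl
  proof eventually_elim
    case (elim \<omega>)
    have "(\<Sum>sp\<in>Sl T. f sp \<omega>) = (\<Sum>sp\<in>Sl T. if nx \<omega> = sp then maxQ (ql \<omega>) sp else 0)"
      by (rule sum.cong) (auto simp: f_def indicator_def)
    also have "\<dots> = maxQ (ql \<omega>) (nx \<omega>)" using elim by (simp add: sum.delta)
    finally show ?case by simp
  qed
  have h_int: "integrable M (\<lambda>\<omega>. maxQ (ql \<omega>) (nx \<omega>))"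
    using integrable_cong_AE[OF hM _ h_eq] fM f_int by (auto intro!: borel_measurable_sum)
  have ce_f: "AE \<omega> in M. real_cond_exp M Hn (f sp) \<omega> = maxQ (ql \<omega>) sp * Pl T P (pih \<omega>) sl a sp" for sp
  proof -
    have indM: "indicator {\<omega>. nx \<omega> = sp} \<in> borel_measurable M"
    proof -
      have "(\<lambda>\<omega>. indicator {sp} (nx \<omega>) :: real) \<in> borel_measurable M" by measurable
      moreover have "(\<lambda>\<omega>. indicator {sp} (nx \<omega>) :: real) = indicator {\<omega>. nx \<omega> = sp}"
        by (auto simp: indicator_def)
      ultimately show ?thesis by simp
    qed
    have "AE \<omega> in M. real_cond_exp M Hn (\<lambda>\<omega>. maxQ (ql \<omega>) sp * indicator {\<omega>. nx \<omega> = sp} \<omega>) \<omega>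
        = maxQ (ql \<omega>) sp * real_cond_exp M Hn (indicator {\<omega>. nx \<omega> = sp}) \<omega>"
      by (rule S0.real_cond_exp_mult[OF mq0 indM]) (use f_int[of sp] in \<open>simp add: f_def\<close>)
    then show ?thesis using law[of sp] unfolding f_def by eventually_elim simp
  qed
  have ce_h: "AE \<omega> in M. real_cond_exp M Hn (\<lambda>\<omega>. maxQ (ql \<omega>) (nx \<omega>)) \<omega> = S \<omega>"
  proof -
    have 1: "AE \<omega> in M. real_cond_exp M Hn (\<lambda>\<omega>. maxQ (ql \<omega>) (nx \<omega>)) \<omega> = real_cond_exp M Hn (\<lambda>\<omega>. \<Sum>sp\<in>Sl T. f sp \<omega>) \<omega>"
      by (rule S0.real_cond_exp_cong[OF h_eq hM]) (auto intro!: borel_measurable_sum fM)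
    have 2: "AE \<omega> in M. real_cond_exp M Hn (\<lambda>\<omega>. \<Sum>sp\<in>Sl T. f sp \<omega>) \<omega> = (\<Sum>sp\<in>Sl T. real_cond_exp M Hn (f sp) \<omega>)"
      by (rule S0.real_cond_exp_sum[OF f_int])
    have 3: "AE \<omega> in M. \<forall>sp\<in>Sl T. real_cond_exp M Hn (f sp) \<omega> = maxQ (ql \<omega>) sp * Pl T P (pih \<omega>) sl a sp"
      by (rule AE_finite_allI) (auto intro: ce_f)
    from 1 2 3 show ?thesis
      by eventually_elim (simp add: S_def mult.commute)
  qed
  have i1: "integrable M (\<lambda>\<omega>. gl * maxQ (ql \<omega>) (nx \<omega>))" using h_int by auto
  have i2: "integrable M (\<lambda>\<omega>. gl * S \<omega>)" using S_int by auto
  have "AE \<omega> in M. real_cond_exp M Hn g \<omega> = real_cond_exp M Hn (\<lambda>\<omega>. gl * maxQ (ql \<omega>) (nx \<omega>)) \<omega> - real_cond_exp M Hn (\<lambda>\<omega>. gl * S \<omega>) \<omega>"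
    unfolding g_eq by (rule S0.real_cond_exp_diff[OF i1 i2])
  moreover have "AE \<omega> in M. real_cond_exp M Hn (\<lambda>\<omega>. gl * maxQ (ql \<omega>) (nx \<omega>)) \<omega> = gl * real_cond_exp M Hn (\<lambda>\<omega>. maxQ (ql \<omega>) (nx \<omega>)) \<omega>"
    by (rule S0.real_cond_exp_cmult[OF h_int])
  moreover have "AE \<omega> in M. real_cond_exp M Hn (\<lambda>\<omega>. gl * S \<omega>) \<omega> = gl * S \<omega>"
    by (rule S0.real_cond_exp_F_meas[OF i2]) measurable
  ultimately show "AE \<omega> in M. real_cond_exp M Hn g \<omega> = 0"
    using ce_h by eventually_elim simp
  show "integrable M g" unfolding g_eq using i1 i2 by auto
  show "AE \<omega> in M. (g \<omega>)^2 \<le> (\<bar>gl\<bar> * (1 + real (card (Sl T :: ('s \<times> 's \<times> nat) set))))^2 * sqnorm_l T (ql \<omega>)"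
    using inSl
  proof eventually_elim
    case (elim \<omega>)
    let ?N = "sqnorm_l T (ql \<omega>)"
    let ?c = "real (card (Sl T :: ('s \<times> 's \<times> nat) set))"
    have N0: "?N \<ge> 0" by (rule sqnorm_l_nonneg)
    have mb: "\<And>x. x \<in> Sl T \<Longrightarrow> \<bar>maxQ (ql \<omega>) x\<bar> \<le> sqrt ?N"
      by (rule abs_le_sqrt[OF maxQ_sq_le_l])
    have "\<bar>S \<omega>\<bar> \<le> (\<Sum>sp\<in>Sl T. \<bar>Pl T P (pih \<omega>) sl a sp * maxQ (ql \<omega>) sp\<bar>)"
      unfolding S_def by (rule sum_abs)
    also have "\<dots> \<le> (\<Sum>sp\<in>(Sl T :: ('s \<times> 's \<times> nat) set). sqrt ?N)"
    proof (rule sum_mono)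
      fix sp :: "'s \<times> 's \<times> nat" assume sp: "sp \<in> Sl T"
      have "\<bar>Pl T P (pih \<omega>) sl a sp * maxQ (ql \<omega>) sp\<bar> \<le> \<bar>maxQ (ql \<omega>) sp\<bar>"
        using Pl01[of \<omega> sp] by (auto simp: abs_mult intro!: mult_left_le_one_le)
      also have "\<dots> \<le> sqrt ?N" using mb[OF sp] .
      finally show "\<bar>Pl T P (pih \<omega>) sl a sp * maxQ (ql \<omega>) sp\<bar> \<le> sqrt ?N" .
    qed
    also have "\<dots> = ?c * sqrt ?N" by simp
    finally have Sb: "\<bar>S \<omega>\<bar> \<le> ?c * sqrt ?N" .
    have "\<bar>g \<omega>\<bar> \<le> \<bar>gl\<bar> * \<bar>maxQ (ql \<omega>) (nx \<omega>)\<bar> + \<bar>gl\<bar> * \<bar>S \<omega>\<bar>"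
      unfolding g_eq by (simp add: abs_mult[symmetric] abs_triangle_ineq4)
    also have "\<dots> \<le> \<bar>gl\<bar> * sqrt ?N + \<bar>gl\<bar> * (?c * sqrt ?N)"
      using mb[OF elim] Sb by (intro add_mono mult_left_mono) auto
    also have "\<dots> = \<bar>gl\<bar> * (1 + ?c) * sqrt ?N" by (simp add: algebra_simps)
    finally have gb: "\<bar>g \<omega>\<bar> \<le> \<bar>gl\<bar> * (1 + ?c) * sqrt ?N" .
    have "(g \<omega>)^2 = \<bar>g \<omega>\<bar>^2" by simp
    also have "\<dots> \<le> (\<bar>gl\<bar> * (1 + ?c) * sqrt ?N)^2"
      by (rule power_mono[OF gb]) simp
    also have "\<dots> = (\<bar>gl\<bar> * (1 + ?c))^2 * ?N" using N0 by (simp add: power_mult_distrib)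
    finally show ?case .
  qed
qed


lemma sq_sum_le: "((a::real) + b)^2 \<le> 2 * a^2 + 2 * b^2"
proof -
  have "(a+b)^2 = 2*a^2 + 2*b^2 - (a-b)^2" by (simp add: power2_eq_square algebra_simps)
  moreover have "0 \<le> (a - b)^2" by simp
  ultimately show ?thesis by linarith
qed

lemma M2_props:
  fixes M Hn Hs :: "'w measure" and qh :: "'w \<Rightarrow> 's::finite \<Rightarrow> 's \<Rightarrow> real"
    and pil :: "'w \<Rightarrow> 's \<times> 's \<times> nat \<Rightarrow> 'a::finite \<Rightarrow> real"
    and sS :: "'w \<Rightarrow> nat \<Rightarrow> 's" and sA :: "'w \<Rightarrow> nat \<Rightarrow> 'a"
    and P :: "'s \<Rightarrow> 'a \<Rightarrow> 's \<Rightarrow> real" and r :: "'s \<Rightarrow> 'a \<Rightarrow> real" and gh rbar :: real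
  assumes prob: "prob_space M"
    and Hn: "subalgebra M Hn" and Hs: "subalgebra M Hs" and H01: "sets Hn \<subseteq> sets Hs"
    and qh_meas: "\<And>x y. (\<lambda>\<omega>. qh \<omega> x y) \<in> borel_measurable Hn"
    and qh_int: "\<And>x y. integrable M (\<lambda>\<omega>. qh \<omega> x y)"
    and pil_meas: "\<And>x b. (\<lambda>\<omega>. pil \<omega> x b) \<in> borel_measurable Hn"
    and pil0: "\<And>\<omega> x b. pil \<omega> x b \<ge> 0" and pil1: "\<And>\<omega> x b. pil \<omega> x b \<le> 1"
    and P0: "\<And>s a s'. P s a s' \<ge> 0" and P1: "\<And>s a s'. P s a s' \<le> 1"
    and r_bound: "\<And>s a. \<bar>r s a\<bar> \<le> rbar"
    and gh: "0 \<le> gh" "gh \<le> 1"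
    and sS_meas: "\<And>k. (\<lambda>\<omega>. sS \<omega> k) \<in> measurable Hs (count_space UNIV)"
    and sA_meas: "\<And>k. (\<lambda>\<omega>. sA \<omega> k) \<in> measurable Hs (count_space UNIV)"
    and law: "\<And>ss as. AE \<omega> in M. real_cond_exp M Hn
             (indicator {\<omega>. (\<forall>k\<le>T. sS \<omega> k = ss k) \<and> (\<forall>k<T. sA \<omega> k = as k)}) \<omega>
           = (if ss 0 = s then seg_prob T P (pil \<omega>) w ss as else 0)"
  defines "g \<equiv> \<lambda>\<omega>. gh ^ T * maxQ (qh \<omega>) (sS \<omega> T)
     - gh ^ T * (\<Sum>sp\<in>UNIV. Ph T P (pil \<omega>) s w sp * maxQ (qh \<omega>) sp)
     + (\<Sum>k<T. gh ^ k * r (sS \<omega> k) (sA \<omega> k))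
     - rh T gh P r (pil \<omega>) s w"
    and "cS \<equiv> real (card (PiE {..T} (\<lambda>_. UNIV :: 's set))) * real (card (seg_actions T :: (nat \<Rightarrow> 'a) set))"
  shows "g \<in> borel_measurable Hs" "integrable M g" "AE \<omega> in M. real_cond_exp M Hn g \<omega> = 0"
    "\<And>\<omega>. (g \<omega>)^2 \<le> 2 * (1 + real CARD('s) * cS)^2 * sqnorm_h (qh \<omega>) + 2 * ((1 + cS) * T * rbar)^2"
proof -
  interpret prob_space M by (rule prob)
  interpret S0: sigma_finite_subalgebra M Hn by (rule sfs[OF prob Hn])
  have H10: "subalgebra Hs Hn" by (rule sub_sub[OF Hn Hs H01])
  define SS where "SS = (PiE {..T} (\<lambda>_. UNIV :: 's set))"
  define AS where "AS = (seg_actions T :: (nat \<Rightarrow> 'a) set)"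
  have fSS: "finite SS" unfolding SS_def by (auto intro!: finite_PiE)
  have fAS: "finite AS" unfolding AS_def seg_actions_def by (auto intro!: finite_PiE)
  have seg_eq: "seg_states T s = {ss \<in> SS. ss 0 = s}" unfolding SS_def seg_states_def by auto
  have cS_eq: "cS = real (card SS) * real (card AS)" unfolding cS_def SS_def AS_def ..
  have rbar0: "rbar \<ge> 0" using r_bound[of undefined undefined] by linarith
  have mq0: "\<And>x. (\<lambda>\<omega>. maxQ (qh \<omega>) x) \<in> borel_measurable Hn" by (rule maxQ_meas[OF qh_meas])
  have mqM: "\<And>x. (\<lambda>\<omega>. maxQ (qh \<omega>) x) \<in> borel_measurable M" by (rule measurable_from_subalg[OF Hn mq0])
  have mq1: "\<And>x. (\<lambda>\<omega>. maxQ (qh \<omega>) x) \<in> borel_measurable Hs" by (rule measurable_from_subalg[OF H10 mq0])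
  have sSM: "\<And>k. (\<lambda>\<omega>. sS \<omega> k) \<in> measurable M (count_space UNIV)" by (rule measurable_from_subalg[OF Hs sS_meas])
  have sAM: "\<And>k. (\<lambda>\<omega>. sA \<omega> k) \<in> measurable M (count_space UNIV)" by (rule measurable_from_subalg[OF Hs sA_meas])
  have h1: "(\<lambda>\<omega>. maxQ (qh \<omega>) (sS \<omega> T)) \<in> borel_measurable Hs"
    using measurable_compose_countable[where f="\<lambda>i \<omega>. maxQ (qh \<omega>) i", OF mq1 sS_meas] by simp
  have r1: "(\<lambda>\<omega>. r (sS \<omega> k) (sA \<omega> k)) \<in> borel_measurable Hs" for k
  proof -
    have "(\<lambda>\<omega>. r i (sA \<omega> k)) \<in> borel_measurable Hs" for i
      using measurable_compose[OF sA_meas[of k], of "\<lambda>x. r i x" borel] by simp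
    then show ?thesis
      using measurable_compose_countable[where f="\<lambda>i \<omega>. r i (sA \<omega> k)", OF _ sS_meas[of k]] by simp
  qed
  note [measurable] = pil_meas mq0 mqM mq1 sSM sAM h1 r1
  have seg_meas: "\<And>ss as. (\<lambda>\<omega>. seg_prob T P (pil \<omega>) w ss as) \<in> borel_measurable Hn"
    unfolding seg_prob_def by measurable
  note [measurable] = seg_meas
  have Ph0: "\<And>sp. (\<lambda>\<omega>. Ph T P (pil \<omega>) s w sp) \<in> borel_measurable Hn" unfolding Ph_def by measurable
  have rh0: "(\<lambda>\<omega>. rh T gh P r (pil \<omega>) s w) \<in> borel_measurable Hn" unfolding rh_def by measurable
  note [measurable] = Ph0 rh0
  define B where "B = (\<lambda>\<omega>. gh ^ T * (\<Sum>sp\<in>UNIV. Ph T P (pil \<omega>) s w sp * maxQ (qh \<omega>) sp) + rh T gh P r (pil \<omega>) s w)"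
  define L where "L = (\<lambda>\<omega>. gh ^ T * maxQ (qh \<omega>) (sS \<omega> T) + (\<Sum>k<T. gh ^ k * r (sS \<omega> k) (sA \<omega> k)))"
  have B0: "B \<in> borel_measurable Hn" unfolding B_def by measurable
  have BM: "B \<in> borel_measurable M" by (rule measurable_from_subalg[OF Hn B0])
  have B1: "B \<in> borel_measurable Hs" by (rule measurable_from_subalg[OF H10 B0])
  have L1: "L \<in> borel_measurable Hs" unfolding L_def by measurable
  have LM: "L \<in> borel_measurable M" by (rule measurable_from_subalg[OF Hs L1])
  note [measurable] = B0 BM B1 L1 LM
  have g_eq: "g = (\<lambda>\<omega>. L \<omega> - B \<omega>)" unfolding g_def L_def B_def by (simp add: fun_eq_iff algebra_simps)
  show "g \<in> borel_measurable Hs" unfolding g_eq by measurable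
  have sp01: "\<And>\<omega> ss as. seg_prob T P (pil \<omega>) w ss as \<ge> 0" "\<And>\<omega> ss as. seg_prob T P (pil \<omega>) w ss as \<le> 1"
    using seg_prob_01[of P "pil _", OF P0 P1 pil0 pil1] by auto
  have segSS: "seg_states T s \<subseteq> SS" using seg_eq by auto
  have Ph_b: "\<bar>Ph T P (pil \<omega>) s w sp\<bar> \<le> cS" for \<omega> sp
  proof -
    let ?X = "{ss \<in> seg_states T s. ss T = sp}"
    have X: "?X \<subseteq> SS" using segSS by auto
    have "Ph T P (pil \<omega>) s w sp = (\<Sum>ss\<in>?X. \<Sum>as\<in>AS. seg_prob T P (pil \<omega>) w ss as)"
      unfolding Ph_def AS_def ..
    also have "\<dots> \<le> (\<Sum>ss\<in>?X. \<Sum>as\<in>AS. (1::real))"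
      by (intro sum_mono) (rule sp01(2))
    also have "\<dots> \<le> (\<Sum>ss\<in>SS. \<Sum>as\<in>AS. (1::real))"
      by (rule sum_mono2[OF fSS X]) auto
    also have "\<dots> = cS" by (simp add: cS_eq)
    finally have 1: "Ph T P (pil \<omega>) s w sp \<le> cS" .
    have "0 \<le> Ph T P (pil \<omega>) s w sp" unfolding Ph_def by (intro sum_nonneg) (rule sp01(1))
    with 1 show ?thesis by simp
  qed
  have R_b: "\<bar>\<Sum>k<T. gh ^ k * r (f k) (h k)\<bar> \<le> T * rbar" for f h
  proof -
    have "\<bar>\<Sum>k<T. gh ^ k * r (f k) (h k)\<bar> \<le> (\<Sum>k<T. \<bar>gh ^ k * r (f k) (h k)\<bar>)" by (rule sum_abs)
    also have "\<dots> \<le> (\<Sum>k<T. rbar)"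
    proof (rule sum_mono)
      fix k
      have "\<bar>gh ^ k\<bar> \<le> 1" using gh by (simp add: power_le_one)
      then have "\<bar>gh ^ k\<bar> * \<bar>r (f k) (h k)\<bar> \<le> 1 * rbar"
        using r_bound by (intro mult_mono) auto
      then show "\<bar>gh ^ k * r (f k) (h k)\<bar> \<le> rbar" by (simp add: abs_mult)
    qed
    also have "\<dots> = T * rbar" by simp
    finally show ?thesis .
  qed
  have rh_b: "\<bar>rh T gh P r (pil \<omega>) s w\<bar> \<le> cS * (T * rbar)" for \<omega>
  proof -
    have "\<bar>rh T gh P r (pil \<omega>) s w\<bar> \<le> (\<Sum>ss\<in>seg_states T s. \<bar>\<Sum>as\<in>AS. seg_prob T P (pil \<omega>) w ss as * (\<Sum>k<T. gh ^ k * r (ss k) (as k))\<bar>)"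
      unfolding rh_def AS_def by (rule sum_abs)
    also have "\<dots> \<le> (\<Sum>ss\<in>seg_states T s. \<Sum>as\<in>AS. \<bar>seg_prob T P (pil \<omega>) w ss as * (\<Sum>k<T. gh ^ k * r (ss k) (as k))\<bar>)"
      by (intro sum_mono sum_abs)
    also have "\<dots> \<le> (\<Sum>ss\<in>seg_states T s. \<Sum>as\<in>AS. T * rbar)"
    proof (intro sum_mono)
      fix ss as
      have "\<bar>seg_prob T P (pil \<omega>) w ss as\<bar> * \<bar>\<Sum>k<T. gh ^ k * r (ss k) (as k)\<bar> \<le> 1 * (T * rbar)"
        using sp01[of \<omega> ss as] R_b[of ss as] by (intro mult_mono) auto
      then show "\<bar>seg_prob T P (pil \<omega>) w ss as * (\<Sum>k<T. gh ^ k * r (ss k) (as k))\<bar> \<le> T * rbar"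
        by (simp add: abs_mult)
    qed
    also have "\<dots> \<le> (\<Sum>ss\<in>SS. \<Sum>as\<in>AS. T * rbar)"
      by (rule sum_mono2[OF fSS segSS]) (auto intro!: sum_nonneg simp: rbar0)
    also have "\<dots> = cS * (T * rbar)" by (simp add: cS_eq)
    finally show ?thesis .
  qed
  show "\<And>\<omega>. (g \<omega>)^2 \<le> 2 * (1 + real CARD('s) * cS)^2 * sqnorm_h (qh \<omega>) + 2 * ((1 + cS) * T * rbar)^2"
  proof -
    fix \<omega>
    let ?N = "sqnorm_h (qh \<omega>)"
    let ?c = "real CARD('s)"
    have N0: "?N \<ge> 0" by (rule sqnorm_h_nonneg)
    have mb: "\<And>x. \<bar>maxQ (qh \<omega>) x\<bar> \<le> sqrt ?N"
      by (rule abs_le_sqrt[OF maxQ_sq_le_h])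
    have ghT: "0 \<le> gh ^ T" "gh ^ T \<le> 1" using gh by (auto simp: power_le_one)
    have "\<bar>\<Sum>sp\<in>UNIV. Ph T P (pil \<omega>) s w sp * maxQ (qh \<omega>) sp\<bar> \<le> (\<Sum>sp\<in>UNIV. \<bar>Ph T P (pil \<omega>) s w sp * maxQ (qh \<omega>) sp\<bar>)"
      by (rule sum_abs)
    also have "\<dots> \<le> (\<Sum>sp\<in>(UNIV::'s set). cS * sqrt ?N)"
    proof (rule sum_mono)
      fix sp :: 's
      have "\<bar>Ph T P (pil \<omega>) s w sp\<bar> * \<bar>maxQ (qh \<omega>) sp\<bar> \<le> cS * sqrt ?N"
        using Ph_b[of \<omega> sp] mb[of sp] by (intro mult_mono) auto
      then show "\<bar>Ph T P (pil \<omega>) s w sp * maxQ (qh \<omega>) sp\<bar> \<le> cS * sqrt ?N" by (simp add: abs_mult)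
    qed
    also have "\<dots> = ?c * cS * sqrt ?N" by simp
    finally have Sb: "\<bar>\<Sum>sp\<in>UNIV. Ph T P (pil \<omega>) s w sp * maxQ (qh \<omega>) sp\<bar> \<le> ?c * cS * sqrt ?N" .
    let ?S = "\<Sum>sp\<in>UNIV. Ph T P (pil \<omega>) s w sp * maxQ (qh \<omega>) sp"
    let ?R = "\<Sum>k<T. gh ^ k * r (sS \<omega> k) (sA \<omega> k)"
    have "\<bar>g \<omega>\<bar> \<le> gh ^ T * \<bar>maxQ (qh \<omega>) (sS \<omega> T)\<bar> + gh ^ T * \<bar>?S\<bar> + \<bar>?R\<bar> + \<bar>rh T gh P r (pil \<omega>) s w\<bar>"
    proof -
      have a1: "\<bar>gh ^ T * maxQ (qh \<omega>) (sS \<omega> T)\<bar> = gh ^ T * \<bar>maxQ (qh \<omega>) (sS \<omega> T)\<bar>"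
        using ghT by (simp add: abs_mult)
      have a2: "\<bar>gh ^ T * ?S\<bar> = gh ^ T * \<bar>?S\<bar>" using ghT by (simp add: abs_mult)
      show ?thesis unfolding g_def using a1 a2 by linarith
    qed
    also have "\<dots> \<le> 1 * sqrt ?N + 1 * (?c * cS * sqrt ?N) + T * rbar + cS * (T * rbar)"
      using ghT mb[of "sS \<omega> T"] Sb R_b[of "sS \<omega>" "sA \<omega>"] rh_b[of \<omega>]
      by (intro add_mono mult_mono) auto
    also have "\<dots> = (1 + ?c * cS) * sqrt ?N + (1 + cS) * T * rbar" by (simp add: algebra_simps)
    finally have gb: "\<bar>g \<omega>\<bar> \<le> (1 + ?c * cS) * sqrt ?N + (1 + cS) * T * rbar" .
    have "(g \<omega>)^2 = \<bar>g \<omega>\<bar>^2" by simp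
    also have "\<dots> \<le> ((1 + ?c * cS) * sqrt ?N + (1 + cS) * T * rbar)^2"
      by (rule power_mono[OF gb]) simp
    also have "\<dots> \<le> 2 * ((1 + ?c * cS) * sqrt ?N)^2 + 2 * ((1 + cS) * T * rbar)^2" by (rule sq_sum_le)
    also have "\<dots> = 2 * (1 + ?c * cS)^2 * ?N + 2 * ((1 + cS) * T * rbar)^2"
      using N0 by (simp add: power_mult_distrib)
    finally show "(g \<omega>)^2 \<le> 2 * (1 + ?c * cS)^2 * ?N + 2 * ((1 + cS) * T * rbar)^2" .
  qed
  define V where "V = (\<lambda>\<omega> (ss::nat \<Rightarrow> 's) (as::nat \<Rightarrow> 'a). gh ^ T * maxQ (qh \<omega>) (ss T) + (\<Sum>k<T. gh ^ k * r (ss k) (as k)))"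
  define E where "E = (\<lambda>(ss::nat \<Rightarrow> 's) (as::nat \<Rightarrow> 'a). {\<omega>. (\<forall>k\<le>T. sS \<omega> k = ss k) \<and> (\<forall>k<T. sA \<omega> k = as k)})"
  have V0: "\<And>ss as. (\<lambda>\<omega>. V \<omega> ss as) \<in> borel_measurable Hn" unfolding V_def by measurable
  have VM: "\<And>ss as. (\<lambda>\<omega>. V \<omega> ss as) \<in> borel_measurable M" by (rule measurable_from_subalg[OF Hn V0])
  have mq_int: "\<And>x. integrable M (\<lambda>\<omega>. maxQ (qh \<omega>) x)"
  proof -
    fix x
    have "integrable M (\<lambda>\<omega>. \<Sum>b\<in>UNIV. \<bar>qh \<omega> x b\<bar>)" using qh_int by auto
    then show "integrable M (\<lambda>\<omega>. maxQ (qh \<omega>) x)"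
      by (rule Bochner_Integration.integrable_bound) (auto intro!: order.trans[OF abs_maxQ_le])
  qed
  have V_int: "\<And>ss as. integrable M (\<lambda>\<omega>. V \<omega> ss as)"
    unfolding V_def using mq_int by auto
  have indE: "(indicator (E ss as) :: 'w \<Rightarrow> real) \<in> borel_measurable M" for ss as
  proof -
    have "(\<lambda>\<omega>. if (\<forall>k\<le>T. sS \<omega> k = ss k) \<and> (\<forall>k<T. sA \<omega> k = as k) then 1 else 0 :: real) \<in> borel_measurable M"
      by (rule pred_E[OF sSM sAM])
    moreover have "(\<lambda>\<omega>. if (\<forall>k\<le>T. sS \<omega> k = ss k) \<and> (\<forall>k<T. sA \<omega> k = as k) then 1 else 0 :: real) = indicator (E ss as)"
      by (auto simp: E_def indicator_def fun_eq_iff)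
    ultimately show ?thesis by simp
  qed
  define f where "f = (\<lambda>p \<omega>. V \<omega> (fst p) (snd p) * indicator (E (fst p) (snd p)) \<omega>)"
  have fM: "\<And>p. f p \<in> borel_measurable M" unfolding f_def using VM indE by measurable
  have f_int: "\<And>p. integrable M (f p)"
    by (rule Bochner_Integration.integrable_bound[OF V_int fM]) (auto simp: f_def indicator_def)
  have L_eq: "L \<omega> = (\<Sum>p\<in>SS \<times> AS. f p \<omega>)" for \<omega>
  proof -
    have Fc: "V \<omega> ss as = V \<omega> (sS \<omega>) (sA \<omega>)" if "\<forall>k\<le>T. ss k = sS \<omega> k" "\<forall>k<T. as k = sA \<omega> k" for ss as
    proof -
      have "ss T = sS \<omega> T" using that(1) by blast
      moreover have "(\<Sum>k<T. gh ^ k * r (ss k) (as k)) = (\<Sum>k<T. gh ^ k * r (sS \<omega> k) (sA \<omega> k))"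
        by (rule sum.cong[OF refl]) (use that in \<open>simp\<close>)
      ultimately show ?thesis unfolding V_def by simp
    qed
    have "V \<omega> (sS \<omega>) (sA \<omega>) = (\<Sum>p\<in>PiE {..T} (\<lambda>_. UNIV) \<times> PiE {..<T} (\<lambda>_. UNIV).
      V \<omega> (fst p) (snd p) * indicator {\<omega>. (\<forall>k\<le>T. sS \<omega> k = fst p k) \<and> (\<forall>k<T. sA \<omega> k = snd p k)} \<omega>)"
      by (rule L_eq_gen[where F=V]) (rule Fc)
    moreover have "L \<omega> = V \<omega> (sS \<omega>) (sA \<omega>)" unfolding L_def V_def ..
    ultimately show ?thesis unfolding f_def E_def SS_def AS_def seg_actions_def by simp
  qed
  have L_int: "integrable M L" unfolding L_eq using f_int by auto
  define B' where "B' = (\<lambda>\<omega>. \<Sum>p\<in>SS \<times> AS. V \<omega> (fst p) (snd p) * (if fst p 0 = s then seg_prob T P (pil \<omega>) w (fst p) (snd p) else 0))"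
  have ce_f: "AE \<omega> in M. real_cond_exp M Hn (f p) \<omega> = V \<omega> (fst p) (snd p) * (if fst p 0 = s then seg_prob T P (pil \<omega>) w (fst p) (snd p) else 0)" for p
  proof -
    have "AE \<omega> in M. real_cond_exp M Hn (\<lambda>\<omega>. V \<omega> (fst p) (snd p) * indicator (E (fst p) (snd p)) \<omega>) \<omega>
        = V \<omega> (fst p) (snd p) * real_cond_exp M Hn (indicator (E (fst p) (snd p))) \<omega>"
      by (rule S0.real_cond_exp_mult[OF V0 indE]) (use f_int[of p] in \<open>simp add: f_def\<close>)
    then show ?thesis using law[of "fst p" "snd p"] unfolding f_def E_def by eventually_elim simp
  qed
  have ce_L: "AE \<omega> in M. real_cond_exp M Hn L \<omega> = B' \<omega>"
  proof -
    have 1: "AE \<omega> in M. real_cond_exp M Hn L \<omega> = real_cond_exp M Hn (\<lambda>\<omega>. \<Sum>p\<in>SS \<times> AS. f p \<omega>) \<omega>"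
      by (rule S0.real_cond_exp_cong) (auto simp: L_eq intro!: borel_measurable_sum fM)
    have 2: "AE \<omega> in M. real_cond_exp M Hn (\<lambda>\<omega>. \<Sum>p\<in>SS \<times> AS. f p \<omega>) \<omega> = (\<Sum>p\<in>SS \<times> AS. real_cond_exp M Hn (f p) \<omega>)"
      by (rule S0.real_cond_exp_sum[OF f_int])
    have 3: "AE \<omega> in M. \<forall>p\<in>SS \<times> AS. real_cond_exp M Hn (f p) \<omega> = V \<omega> (fst p) (snd p) * (if fst p 0 = s then seg_prob T P (pil \<omega>) w (fst p) (snd p) else 0)"
      by (rule AE_finite_allI[OF finite_cartesian_product[OF fSS fAS]]) (rule ce_f)
    from 1 2 3 show ?thesis by eventually_elim (simp add: B'_def)
  qed
  have B'_eq: "B' \<omega> = B \<omega>" for \<omega>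
  proof -
    let ?sp = "\<lambda>ss as. seg_prob T P (pil \<omega>) w ss as"
    have "B' \<omega> = (\<Sum>ss\<in>SS. \<Sum>as\<in>AS. V \<omega> ss as * (if ss 0 = s then ?sp ss as else 0))"
      by (simp only: B'_def sum.cartesian_product' fst_conv snd_conv)
    also have "\<dots> = (\<Sum>ss\<in>SS. if ss 0 = s then (\<Sum>as\<in>AS. ?sp ss as * V \<omega> ss as) else 0)"
      by (rule sum.cong) (auto simp: mult.commute)
    also have "\<dots> = (\<Sum>ss\<in>seg_states T s. \<Sum>as\<in>AS. ?sp ss as * V \<omega> ss as)"
      unfolding seg_eq by (simp add: sum.inter_filter[OF fSS])
    also have "\<dots> = gh ^ T * (\<Sum>ss\<in>seg_states T s. (\<Sum>as\<in>AS. ?sp ss as) * maxQ (qh \<omega>) (ss T))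
        + (\<Sum>ss\<in>seg_states T s. \<Sum>as\<in>AS. ?sp ss as * (\<Sum>k<T. gh ^ k * r (ss k) (as k)))"
    proof -
      have e: "?sp ss as * V \<omega> ss as = gh ^ T * (?sp ss as * maxQ (qh \<omega>) (ss T)) + ?sp ss as * (\<Sum>k<T. gh ^ k * r (ss k) (as k))" for ss as
        unfolding V_def by (simp add: algebra_simps)
      have e2: "gh ^ T * (\<Sum>ss\<in>seg_states T s. (\<Sum>as\<in>AS. ?sp ss as) * maxQ (qh \<omega>) (ss T))
          = (\<Sum>ss\<in>seg_states T s. \<Sum>as\<in>AS. gh ^ T * (?sp ss as * maxQ (qh \<omega>) (ss T)))"
        by (simp only: sum_distrib_left sum_distrib_right)
      show ?thesis unfolding e e2 sum.distrib ..
    qed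
    also have "(\<Sum>ss\<in>seg_states T s. \<Sum>as\<in>AS. ?sp ss as * (\<Sum>k<T. gh ^ k * r (ss k) (as k))) = rh T gh P r (pil \<omega>) s w"
      unfolding rh_def AS_def ..
    also have "(\<Sum>ss\<in>seg_states T s. (\<Sum>as\<in>AS. ?sp ss as) * maxQ (qh \<omega>) (ss T))
        = (\<Sum>sp\<in>UNIV. Ph T P (pil \<omega>) s w sp * maxQ (qh \<omega>) sp)"
    proof -
      have fseg: "finite (seg_states T s)" using finite_subset[OF segSS fSS] .
      have "(\<Sum>sp\<in>UNIV. Ph T P (pil \<omega>) s w sp * maxQ (qh \<omega>) sp)
          = (\<Sum>sp\<in>UNIV. \<Sum>ss\<in>{ss \<in> seg_states T s. ss T = sp}. (\<Sum>as\<in>AS. ?sp ss as) * maxQ (qh \<omega>) (ss T))"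
        unfolding Ph_def AS_def by (auto simp: sum_distrib_right intro!: sum.cong)
      also have "\<dots> = (\<Sum>ss\<in>seg_states T s. (\<Sum>as\<in>AS. ?sp ss as) * maxQ (qh \<omega>) (ss T))"
        by (rule sum.group[OF fseg]) auto
      finally show ?thesis by simp
    qed
    finally show ?thesis unfolding B_def by simp
  qed
  have B'_int: "integrable M B'"
    unfolding B'_def
  proof (rule Bochner_Integration.integrable_sum)
    fix p :: "(nat \<Rightarrow> 's) \<times> (nat \<Rightarrow> 'a)"
    show "integrable M (\<lambda>\<omega>. V \<omega> (fst p) (snd p) * (if fst p 0 = s then seg_prob T P (pil \<omega>) w (fst p) (snd p) else 0))"
    proof (rule Bochner_Integration.integrable_bound[OF V_int[of "fst p" "snd p"]])
      show "(\<lambda>\<omega>. V \<omega> (fst p) (snd p) * (if fst p 0 = s then seg_prob T P (pil \<omega>) w (fst p) (snd p) else 0)) \<in> borel_measurable M"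
        using VM measurable_from_subalg[OF Hn seg_meas] by measurable
      show "AE \<omega> in M. norm (V \<omega> (fst p) (snd p) * (if fst p 0 = s then seg_prob T P (pil \<omega>) w (fst p) (snd p) else 0)) \<le> norm (V \<omega> (fst p) (snd p))"
      proof (intro AE_I2)
        fix \<omega>
        show "norm (V \<omega> (fst p) (snd p) * (if fst p 0 = s then seg_prob T P (pil \<omega>) w (fst p) (snd p) else 0)) \<le> norm (V \<omega> (fst p) (snd p))"
          using sp01(1)[of \<omega> "fst p" "snd p"] sp01(2)[of \<omega> "fst p" "snd p"]
          by (simp add: abs_mult mult_right_le_one_le)
      qed
    qed
  qed
  have B_int: "integrable M B" using B'_int B'_eq by (simp add: fun_eq_iff[symmetric] B'_eq[abs_def])
  show "integrable M g" unfolding g_eq using L_int B_int by auto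
  have "AE \<omega> in M. real_cond_exp M Hn g \<omega> = real_cond_exp M Hn L \<omega> - real_cond_exp M Hn B \<omega>"
    unfolding g_eq by (rule S0.real_cond_exp_diff[OF L_int B_int])
  moreover have "AE \<omega> in M. real_cond_exp M Hn B \<omega> = B \<omega>"
    by (rule S0.real_cond_exp_F_meas[OF B_int B0])
  ultimately show "AE \<omega> in M. real_cond_exp M Hn g \<omega> = 0"
    using ce_L by eventually_elim (simp add: B'_eq)
qed


lemma cond_bound:
  fixes f b :: "'w \<Rightarrow> real"
  assumes prob: "prob_space M" and sub: "subalgebra M Fn" and fM: "f \<in> borel_measurable M"
    and bF: "b \<in> borel_measurable Fn" and le: "AE \<omega> in M. f \<omega> \<le> b \<omega>"
  shows "AE \<omega> in M. nn_cond_exp M Fn (\<lambda>\<omega>. ennreal (f \<omega>)) \<omega> \<le> ennreal (b \<omega>)"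
proof -
  interpret S: sigma_finite_subalgebra M Fn by (rule sfs[OF prob sub])
  have bM: "b \<in> borel_measurable M" by (rule measurable_from_subalg[OF sub bF])
  have a: "AE \<omega> in M. ennreal (f \<omega>) \<le> ennreal (b \<omega>)" using le by eventually_elim (rule ennreal_leI)
  have m1: "(\<lambda>\<omega>. ennreal (f \<omega>)) \<in> borel_measurable M" using fM by measurable
  have m2: "(\<lambda>\<omega>. ennreal (b \<omega>)) \<in> borel_measurable M" using bM by measurable
  have m3: "(\<lambda>\<omega>. ennreal (b \<omega>)) \<in> borel_measurable Fn" using bF by measurable
  have 1: "AE \<omega> in M. nn_cond_exp M Fn (\<lambda>\<omega>. ennreal (f \<omega>)) \<omega> \<le> nn_cond_exp M Fn (\<lambda>\<omega>. ennreal (b \<omega>)) \<omega>"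
    by (rule S.nn_cond_exp_mono[OF a m1 m2])
  have 2: "AE \<omega> in M. ennreal (b \<omega>) = nn_cond_exp M Fn (\<lambda>\<omega>. ennreal (b \<omega>)) \<omega>"
    by (rule S.nn_cond_exp_F_meas[OF m3])
  from 1 2 show ?thesis by eventually_elim simp
qed

lemma lin_bound2: "(a::real) \<ge> 0 \<Longrightarrow> b \<ge> 0 \<Longrightarrow> x \<ge> 0 \<Longrightarrow> y \<ge> 0 \<Longrightarrow> a * x + b \<le> (a + b + 1) * (1 + x + y)"
proof -
  assume h: "a \<ge> 0" "b \<ge> 0" "x \<ge> 0" "y \<ge> 0"
  have "(a + b + 1) * (1 + x + y) = a * x + b + (a + a * y + b * x + b * y + 1 + x + y)" by (simp add: algebra_simps)
  moreover have "a * y \<ge> 0" "b * x \<ge> 0" "b * y \<ge> 0" using h by auto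
  ultimately show ?thesis using h by linarith
qed

lemma lin_bound: "(a::real) \<ge> 0 \<Longrightarrow> b \<ge> 0 \<Longrightarrow> x \<ge> 0 \<Longrightarrow> y \<ge> 0 \<Longrightarrow> a * y + b \<le> (a + b + 1) * (1 + x + y)"
proof -
  assume h: "a \<ge> 0" "b \<ge> 0" "x \<ge> 0" "y \<ge> 0"
  have "(a + b + 1) * (1 + x + y) = a * y + b + (a + a * x + b * x + b * y + 1 + x + y)" by (simp add: algebra_simps)
  moreover have "a * x \<ge> 0" "b * x \<ge> 0" "b * y \<ge> 0" using h by auto
  ultimately show ?thesis using h by linarith
qed

theorem lemma5:
  fixes M :: "'w measure" and H :: "nat \<Rightarrow> 'w measure"
    and T :: nat and P :: "'s::finite \<Rightarrow> 'a::finite \<Rightarrow> 's \<Rightarrow> real"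
    and r :: "'s \<Rightarrow> 'a \<Rightarrow> real" and rbar gh gl :: real
    and Qh :: "nat \<Rightarrow> 'w \<Rightarrow> 's \<Rightarrow> 's \<Rightarrow> real"
    and Ql :: "nat \<Rightarrow> 'w \<Rightarrow> 's \<times> 's \<times> nat \<Rightarrow> 'a \<Rightarrow> real"
    and Pih :: "('s \<Rightarrow> 's \<Rightarrow> real) \<Rightarrow> ('s \<times> 's \<times> nat \<Rightarrow> 'a \<Rightarrow> real) \<Rightarrow> 's \<Rightarrow> 's \<Rightarrow> real"
    and Pil :: "('s \<Rightarrow> 's \<Rightarrow> real) \<Rightarrow> ('s \<times> 's \<times> nat \<Rightarrow> 'a \<Rightarrow> real) \<Rightarrow> 's \<times> 's \<times> nat \<Rightarrow> 'a \<Rightarrow> real"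
    and smp :: "nat \<Rightarrow> 'w \<Rightarrow> 's \<times> 's \<times> nat \<Rightarrow> 'a \<Rightarrow> 's \<times> 's \<times> nat"
    and segS :: "nat \<Rightarrow> 'w \<Rightarrow> 's \<Rightarrow> 's \<Rightarrow> nat \<Rightarrow> 's"
    and segA :: "nat \<Rightarrow> 'w \<Rightarrow> 's \<Rightarrow> 's \<Rightarrow> nat \<Rightarrow> 'a"
  defines "M1 \<equiv> noiseL T gl P Pih Qh Ql smp"
    and "M2 \<equiv> noiseH T gh P r Pil Qh Ql segS segA"
    and "F \<equiv> filt M T Qh Ql (noiseL T gl P Pih Qh Ql smp) (noiseH T gh P r Pil Qh Ql segS segA)"
  assumes prob: "prob_space M"
    and T: "T \<ge> 1"
    and gh: "0 < gh" "gh < 1" and gl: "0 < gl" "gl < 1"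
    and P_nonneg: "\<And>s a s'. P s a s' \<ge> 0"
    and P_sum: "\<And>s a. (\<Sum>s'\<in>UNIV. P s a s') = 1"
    and r_bound: "\<And>s a. \<bar>r s a\<bar> \<le> rbar"
    and Pih_nonneg: "\<And>qh ql s w. Pih qh ql s w \<ge> 0"
    and Pih_sum: "\<And>qh ql s. (\<Sum>w\<in>UNIV. Pih qh ql s w) = 1"
    and Pil_nonneg: "\<And>qh ql sl a. Pil qh ql sl a \<ge> 0"
    and Pil_sum: "\<And>qh ql sl. (\<Sum>a\<in>UNIV. Pil qh ql sl a) = 1"
    and Pih_meas: "(\<lambda>q. Pih (fst q) (snd q)) \<in> measurable (QHspace \<Otimes>\<^sub>M QLspace) QHspace"
    and Pil_meas: "(\<lambda>q. Pil (fst q) (snd q)) \<in> measurable (QHspace \<Otimes>\<^sub>M QLspace) QLspace"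
    and H_sub: "\<And>n. subalgebra M (H n)"
    and H_mono: "\<And>n. sets (H n) \<subseteq> sets (H (Suc n))"
    and Qh_meas: "\<And>n s w. (\<lambda>\<omega>. Qh n \<omega> s w) \<in> borel_measurable (H n)"
    and Ql_meas: "\<And>n sl a. (\<lambda>\<omega>. Ql n \<omega> sl a) \<in> borel_measurable (H n)"
    and Qh_int: "\<And>n s w. integrable M (\<lambda>\<omega>. Qh n \<omega> s w)"
    and Ql_int: "\<And>n sl a. integrable M (\<lambda>\<omega>. Ql n \<omega> sl a)"
    and nxt_meas: "\<And>n sl a. (\<lambda>\<omega>. smp n \<omega> sl a) \<in> measurable (H (Suc n)) (count_space UNIV)"
    and segS_meas: "\<And>n s w k. (\<lambda>\<omega>. segS n \<omega> s w k) \<in> measurable (H (Suc n)) (count_space UNIV)"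
    and segA_meas: "\<And>n s w k. (\<lambda>\<omega>. segA n \<omega> s w k) \<in> measurable (H (Suc n)) (count_space UNIV)"
    and nxt_law: "\<And>n sl a sp. sl \<in> Sl T \<Longrightarrow>
       AE \<omega> in M. real_cond_exp M (H n) (indicator {\<omega>. smp n \<omega> sl a = sp}) \<omega>
                   = Pl T P (Pih (Qh n \<omega>) (Ql n \<omega>)) sl a sp"
    and seg_law: "\<And>n s w ss as.
       AE \<omega> in M. real_cond_exp M (H n)
             (indicator {\<omega>. (\<forall>k\<le>T. segS n \<omega> s w k = ss k) \<and> (\<forall>k<T. segA n \<omega> s w k = as k)}) \<omega>
           = (if ss 0 = s then seg_prob T P (Pil (Qh n \<omega>) (Ql n \<omega>)) w ss as else 0)"
  shows "(\<forall>n. subalgebra M (F n) \<and> sets (F n) \<subseteq> sets (F (Suc n)))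
    \<and> (\<forall>n sl a. sl \<in> Sl T \<longrightarrow>
          integrable M (\<lambda>\<omega>. M1 n \<omega> sl a)
          \<and> (\<lambda>\<omega>. M1 n \<omega> sl a) \<in> borel_measurable (F (Suc n))
          \<and> (AE \<omega> in M. real_cond_exp M (F n) (\<lambda>\<omega>. M1 n \<omega> sl a) \<omega> = 0))
    \<and> (\<forall>n s w.
          integrable M (\<lambda>\<omega>. M2 n \<omega> s w)
          \<and> (\<lambda>\<omega>. M2 n \<omega> s w) \<in> borel_measurable (F (Suc n))
          \<and> (AE \<omega> in M. real_cond_exp M (F n) (\<lambda>\<omega>. M2 n \<omega> s w) \<omega> = 0))
    \<and> (\<exists>K1>0. \<forall>n. AE \<omega> in M.
          nn_cond_exp M (F n) (\<lambda>\<omega>. ennreal (sqnorm_l T (M1 n \<omega>))) \<omega>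
          \<le> ennreal (K1 * (1 + sqnorm_l T (Ql n \<omega>) + sqnorm_h (Qh n \<omega>))))
    \<and> (\<exists>K2>0. \<forall>n. AE \<omega> in M.
          nn_cond_exp M (F n) (\<lambda>\<omega>. ennreal (sqnorm_h (M2 n \<omega>))) \<omega>
          \<le> ennreal (K2 * (1 + sqnorm_l T (Ql n \<omega>) + sqnorm_h (Qh n \<omega>))))"
proof -
  interpret prob_space M by (rule prob)
  have P1: "P s a s' \<le> 1" for s a s' by (rule le_one_of_sum[of "P s a"]) (auto intro: P_nonneg P_sum)
  have Pih1: "Pih qh ql s w \<le> 1" for qh ql s w by (rule le_one_of_sum[of "Pih qh ql s"]) (auto intro: Pih_nonneg Pih_sum)
  have Pil1: "Pil qh ql sl a \<le> 1" for qh ql sl a by (rule le_one_of_sum[of "Pil qh ql sl"]) (auto intro: Pil_nonneg Pil_sum)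
  have spH: "space (H n) = space M" for n using H_sub[of n] by (simp add: subalgebra_def)
  have Hmono: "sets (H m) \<subseteq> sets (H n)" if "m \<le> n" for m n
    using lift_Suc_mono_le[of "\<lambda>n. sets (H n)", OF H_mono that] .
  have Hup: "f \<in> borel_measurable (H n)" if "m \<le> n" "f \<in> borel_measurable (H m)" for f m n
    using measurable_from_subalg[OF sub_sub[OF H_sub H_sub Hmono[OF that(1)]] that(2)] .
  have PihM: "(\<lambda>q. Pih (fst q) (snd q)) \<in> measurable (QHspace \<Otimes>\<^sub>M QLspace) (PiM UNIV (\<lambda>_. PiM UNIV (\<lambda>_. borel)))"
    using Pih_meas by (simp only: QHspace_def)
  have PilM: "(\<lambda>q. Pil (fst q) (snd q)) \<in> measurable (QHspace \<Otimes>\<^sub>M QLspace) (PiM UNIV (\<lambda>_. PiM UNIV (\<lambda>_. borel)))"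
    using Pil_meas by (simp only: QLspace_def)
  have pihm: "(\<lambda>\<omega>. Pih (Qh n \<omega>) (Ql n \<omega>) x y) \<in> borel_measurable (H n)" for n x y
    by (rule pol_meas[OF PihM Qh_meas Ql_meas])
  have pilm: "(\<lambda>\<omega>. Pil (Qh n \<omega>) (Ql n \<omega>) x y) \<in> borel_measurable (H n)" for n x y
    by (rule pol_meas[OF PilM Qh_meas Ql_meas])
  have gh0: "0 \<le> gh" and gh1: "gh \<le> 1" using gh by auto
  define c1 where "c1 = (\<bar>gl\<bar> * (1 + real (card (Sl T :: ('s \<times> 's \<times> nat) set))))^2"
  have m1: "(\<lambda>\<omega>. M1 n \<omega> sl a) \<in> borel_measurable (H (Suc n)) \<and> integrable M (\<lambda>\<omega>. M1 n \<omega> sl a)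
     \<and> (AE \<omega> in M. real_cond_exp M (H n) (\<lambda>\<omega>. M1 n \<omega> sl a) \<omega> = 0)
     \<and> (AE \<omega> in M. (M1 n \<omega> sl a)^2 \<le> c1 * sqnorm_l T (Ql n \<omega>))" if sl: "sl \<in> Sl T" for n sl a
  proof -
    have eq: "M1 n \<omega> sl a = gl * maxQ (Ql n \<omega>) (smp n \<omega> sl a)
        - gl * (\<Sum>sp\<in>Sl T. Pl T P (Pih (Qh n \<omega>) (Ql n \<omega>)) sl a sp * maxQ (Ql n \<omega>) sp)" for \<omega>
      by (simp add: M1_def noiseL_def noise1_def)
    note R = M1_props[where M=M and Hn="H n" and Hs="H (Suc n)" and ql="Ql n"
        and pih="\<lambda>\<omega>. Pih (Qh n \<omega>) (Ql n \<omega>)" and nx="\<lambda>\<omega>. smp n \<omega> sl a" and P=P and gl=gl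
        and T=T and sl=sl and a=a, OF prob T H_sub H_sub H_mono Ql_meas Ql_int pihm Pih_nonneg Pih1
        P_nonneg P1 nxt_meas nxt_law[OF sl]]
    show ?thesis unfolding eq c1_def using R by simp
  qed
  define cS where "cS = real (card (PiE {..T} (\<lambda>_. UNIV :: 's set))) * real (card (seg_actions T :: (nat \<Rightarrow> 'a) set))"
  define A2 where "A2 = 2 * (1 + real CARD('s) * cS)^2"
  define B2 where "B2 = 2 * ((1 + cS) * T * rbar)^2"
  have m2: "(\<lambda>\<omega>. M2 n \<omega> s w) \<in> borel_measurable (H (Suc n)) \<and> integrable M (\<lambda>\<omega>. M2 n \<omega> s w)
     \<and> (AE \<omega> in M. real_cond_exp M (H n) (\<lambda>\<omega>. M2 n \<omega> s w) \<omega> = 0)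
     \<and> (\<forall>\<omega>. (M2 n \<omega> s w)^2 \<le> A2 * sqnorm_h (Qh n \<omega>) + B2)" for n s w
  proof -
    have eq: "M2 n \<omega> s w = gh ^ T * maxQ (Qh n \<omega>) (segS n \<omega> s w T)
     - gh ^ T * (\<Sum>sp\<in>UNIV. Ph T P (Pil (Qh n \<omega>) (Ql n \<omega>)) s w sp * maxQ (Qh n \<omega>) sp)
     + (\<Sum>k<T. gh ^ k * r (segS n \<omega> s w k) (segA n \<omega> s w k))
     - rh T gh P r (Pil (Qh n \<omega>) (Ql n \<omega>)) s w" for \<omega>
      by (simp add: M2_def noiseH_def noise2_def)
    note R = M2_props[where M=M and Hn="H n" and Hs="H (Suc n)" and qh="Qh n"
        and pil="\<lambda>\<omega>. Pil (Qh n \<omega>) (Ql n \<omega>)" and sS="\<lambda>\<omega>. segS n \<omega> s w" and sA="\<lambda>\<omega>. segA n \<omega> s w"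
        and P=P and r=r and gh=gh and rbar=rbar and T=T and s=s and w=w,
        OF prob H_sub H_sub H_mono Qh_meas Qh_int pilm Pil_nonneg Pil1 P_nonneg P1 r_bound gh0 gh1
        segS_meas segA_meas seg_law]
    show ?thesis unfolding eq A2_def B2_def cS_def using R by simp
  qed
  define G where "G n = ({(\<lambda>\<omega>. Ql m \<omega> sl a) | m sl a. m \<le> n \<and> sl \<in> Sl T}
           \<union> {(\<lambda>\<omega>. Qh m \<omega> s w) | m s w. m \<le> n}
           \<union> {(\<lambda>\<omega>. M1 m \<omega> sl a) | m sl a. m < n \<and> sl \<in> Sl T}
           \<union> {(\<lambda>\<omega>. M2 m \<omega> s w) | m s w. m < n})" for n
  have F_eq: "F n = gen_sigma M (G n)" for n
    unfolding F_def filt_def G_def M1_def M2_def ..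
  have GH: "f \<in> borel_measurable (H n)" if "f \<in> G n" for f n
  proof -
    have "f \<in> borel_measurable (H m)" if "m \<le> n" and "f \<in> borel_measurable (H m)" for m
      using Hup that by blast
    then show ?thesis using that unfolding G_def
      by (auto intro: Hup[OF _ Ql_meas] Hup[OF _ Qh_meas] Hup[OF _ conjunct1[OF m1]] Hup[OF _ conjunct1[OF m2]]
          simp: Suc_le_eq)
  qed
  have GM: "f \<in> borel_measurable M" if "f \<in> G n" for f n
    using measurable_from_subalg[OF H_sub GH[OF that]] .
  have Fsub: "subalgebra M (F n)" for n unfolding F_eq by (rule gen_sigma_subalg[OF GM])
  have Fmono: "sets (F n) \<subseteq> sets (F (Suc n))" for n
    unfolding F_eq by (rule gen_sigma_mono) (unfold G_def, intro Un_mono; blast intro: le_SucI less_SucI)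
  have FH: "sets (F n) \<subseteq> sets (H n)" for n
    unfolding F_eq by (rule gen_sigma_le[OF spH GH])
  have FmeasG: "f \<in> borel_measurable (F n)" if "f \<in> G n" for f n
    unfolding F_eq by (rule gen_sigma_meas[OF that])
  have memQl: "(\<lambda>\<omega>. Ql m \<omega> sl a) \<in> G n" if "sl \<in> Sl T" "m \<le> n" for sl m n a
    unfolding G_def by (rule UnI1, rule UnI1, rule UnI1) (use that in blast)
  have memQh: "(\<lambda>\<omega>. Qh m \<omega> s w) \<in> G n" if "m \<le> n" for m n s w
    unfolding G_def by (rule UnI1, rule UnI1, rule UnI2) (use that in blast)
  have memM1: "(\<lambda>\<omega>. M1 m \<omega> sl a) \<in> G n" if "sl \<in> Sl T" "m < n" for sl m n a
    unfolding G_def by (rule UnI1, rule UnI2) (use that in blast)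
  have memM2: "(\<lambda>\<omega>. M2 m \<omega> s w) \<in> G n" if "m < n" for m n s w
    unfolding G_def by (rule UnI2) (use that in blast)
  have part1: "\<forall>n. subalgebra M (F n) \<and> sets (F n) \<subseteq> sets (F (Suc n))" using Fsub Fmono by blast
  have part2: "\<forall>n sl a. sl \<in> Sl T \<longrightarrow>
          integrable M (\<lambda>\<omega>. M1 n \<omega> sl a)
          \<and> (\<lambda>\<omega>. M1 n \<omega> sl a) \<in> borel_measurable (F (Suc n))
          \<and> (AE \<omega> in M. real_cond_exp M (F n) (\<lambda>\<omega>. M1 n \<omega> sl a) \<omega> = 0)"
  proof (intro allI impI conjI)
    fix n sl a assume sl: "(sl :: 's \<times> 's \<times> nat) \<in> Sl T"
    show "integrable M (\<lambda>\<omega>. M1 n \<omega> sl a)" using m1[OF sl] by blast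
    show "(\<lambda>\<omega>. M1 n \<omega> sl a) \<in> borel_measurable (F (Suc n))"
      by (rule FmeasG[OF memM1[OF sl]]) simp
    show "AE \<omega> in M. real_cond_exp M (F n) (\<lambda>\<omega>. M1 n \<omega> sl a) \<omega> = 0"
      using m1[OF sl] by (intro tower0[OF prob H_sub Fsub FH]) auto
  qed
  have part3: "\<forall>n s w.
          integrable M (\<lambda>\<omega>. M2 n \<omega> s w)
          \<and> (\<lambda>\<omega>. M2 n \<omega> s w) \<in> borel_measurable (F (Suc n))
          \<and> (AE \<omega> in M. real_cond_exp M (F n) (\<lambda>\<omega>. M2 n \<omega> s w) \<omega> = 0)"
  proof (intro allI impI conjI)
    fix n s w
    show "integrable M (\<lambda>\<omega>. M2 n \<omega> s w)" using m2 by blast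
    show "(\<lambda>\<omega>. M2 n \<omega> s w) \<in> borel_measurable (F (Suc n))"
      by (rule FmeasG[OF memM2]) simp
    show "AE \<omega> in M. real_cond_exp M (F n) (\<lambda>\<omega>. M2 n \<omega> s w) \<omega> = 0"
      using m2 by (intro tower0[OF prob H_sub Fsub FH]) auto
  qed
  have Nl_F: "(\<lambda>\<omega>. sqnorm_l T (Ql n \<omega>)) \<in> borel_measurable (F n)" for n
    unfolding sqnorm_l_def
  proof (rule borel_measurable_sum)
    fix sl :: "'s \<times> 's \<times> nat" assume sl: "sl \<in> Sl T"
    show "(\<lambda>\<omega>. \<Sum>a\<in>UNIV. (Ql n \<omega> sl a)^2) \<in> borel_measurable (F n)"
    proof (rule borel_measurable_sum)
      fix a :: 'a
      have "(\<lambda>\<omega>. Ql n \<omega> sl a) \<in> borel_measurable (F n)" by (rule FmeasG[OF memQl[OF sl]]) simp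
      then show "(\<lambda>\<omega>. (Ql n \<omega> sl a)^2) \<in> borel_measurable (F n)" by (rule borel_measurable_power)
    qed
  qed
  have Nh_F: "(\<lambda>\<omega>. sqnorm_h (Qh n \<omega>)) \<in> borel_measurable (F n)" for n
    unfolding sqnorm_h_def
  proof (rule borel_measurable_sum)
    fix s :: 's
    show "(\<lambda>\<omega>. \<Sum>w\<in>UNIV. (Qh n \<omega> s w)^2) \<in> borel_measurable (F n)"
    proof (rule borel_measurable_sum)
      fix w :: 's
      have "(\<lambda>\<omega>. Qh n \<omega> s w) \<in> borel_measurable (F n)" by (rule FmeasG[OF memQh]) simp
      then show "(\<lambda>\<omega>. (Qh n \<omega> s w)^2) \<in> borel_measurable (F n)" by (rule borel_measurable_power)
    qed
  qed
  note [measurable] = Nl_F Nh_F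
  have part4: "\<exists>K1>0. \<forall>n. AE \<omega> in M.
          nn_cond_exp M (F n) (\<lambda>\<omega>. ennreal (sqnorm_l T (M1 n \<omega>))) \<omega>
          \<le> ennreal (K1 * (1 + sqnorm_l T (Ql n \<omega>) + sqnorm_h (Qh n \<omega>)))"
  proof (intro exI conjI allI)
    let ?C = "real (card (Sl T :: ('s \<times> 's \<times> nat) set)) * real CARD('a) * c1"
    have C0: "?C \<ge> 0" by (simp add: c1_def)
    show "?C + 0 + 1 > 0" using C0 by linarith
    fix n
    show "AE \<omega> in M. nn_cond_exp M (F n) (\<lambda>\<omega>. ennreal (sqnorm_l T (M1 n \<omega>))) \<omega>
          \<le> ennreal ((?C + 0 + 1) * (1 + sqnorm_l T (Ql n \<omega>) + sqnorm_h (Qh n \<omega>)))"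
    proof (rule cond_bound[OF prob Fsub])
      show "(\<lambda>\<omega>. sqnorm_l T (M1 n \<omega>)) \<in> borel_measurable M"
        unfolding sqnorm_l_def
      proof (rule borel_measurable_sum)
        fix sl :: "'s \<times> 's \<times> nat" assume sl: "sl \<in> Sl T"
        show "(\<lambda>\<omega>. \<Sum>a\<in>UNIV. (M1 n \<omega> sl a)^2) \<in> borel_measurable M"
        proof (rule borel_measurable_sum)
          fix a :: 'a
          have "(\<lambda>\<omega>. M1 n \<omega> sl a) \<in> borel_measurable M"
            using measurable_from_subalg[OF H_sub] m1[OF sl, of n a] by blast
          then show "(\<lambda>\<omega>. (M1 n \<omega> sl a)^2) \<in> borel_measurable M" by (rule borel_measurable_power)
        qed
      qed
      show "(\<lambda>\<omega>. (?C + 0 + 1) * (1 + sqnorm_l T (Ql n \<omega>) + sqnorm_h (Qh n \<omega>))) \<in> borel_measurable (F n)"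
        by measurable
      have "AE \<omega> in M. \<forall>sl\<in>Sl T. \<forall>a\<in>UNIV. (M1 n \<omega> sl a)^2 \<le> c1 * sqnorm_l T (Ql n \<omega>)"
      proof (rule AE_finite_allI[OF finite_Sl])
        fix sl :: "'s \<times> 's \<times> nat" assume sl: "sl \<in> Sl T"
        show "AE \<omega> in M. \<forall>a\<in>UNIV. (M1 n \<omega> sl a)^2 \<le> c1 * sqnorm_l T (Ql n \<omega>)"
        proof (rule AE_finite_allI)
          fix a :: 'a
          show "AE \<omega> in M. (M1 n \<omega> sl a)^2 \<le> c1 * sqnorm_l T (Ql n \<omega>)" using m1[OF sl, of n a] by blast
        qed simp
      qed
      then show "AE \<omega> in M. sqnorm_l T (M1 n \<omega>) \<le> (?C + 0 + 1) * (1 + sqnorm_l T (Ql n \<omega>) + sqnorm_h (Qh n \<omega>))"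
      proof eventually_elim
        case (elim \<omega>)
        have "sqnorm_l T (M1 n \<omega>) \<le> (\<Sum>sl\<in>(Sl T :: ('s \<times> 's \<times> nat) set). \<Sum>a\<in>(UNIV :: 'a set). c1 * sqnorm_l T (Ql n \<omega>))"
          unfolding sqnorm_l_def[of T "M1 n \<omega>"] using elim by (intro sum_mono) auto
        also have "\<dots> = ?C * sqnorm_l T (Ql n \<omega>) + 0" by simp
        also have "\<dots> \<le> (?C + 0 + 1) * (1 + sqnorm_l T (Ql n \<omega>) + sqnorm_h (Qh n \<omega>))"
          by (rule lin_bound2[OF C0 _ sqnorm_l_nonneg sqnorm_h_nonneg]) simp
        finally show ?case .
      qed
    qed
  qed
  have part5: "\<exists>K2>0. \<forall>n. AE \<omega> in M.
          nn_cond_exp M (F n) (\<lambda>\<omega>. ennreal (sqnorm_h (M2 n \<omega>))) \<omega>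
          \<le> ennreal (K2 * (1 + sqnorm_l T (Ql n \<omega>) + sqnorm_h (Qh n \<omega>)))"
  proof (intro exI conjI allI)
    let ?a = "real CARD('s) * real CARD('s) * A2"
    let ?b = "real CARD('s) * real CARD('s) * B2"
    have a0: "?a \<ge> 0" by (simp add: A2_def)
    have b0: "?b \<ge> 0" by (simp add: B2_def)
    show "?a + ?b + 1 > 0" using a0 b0 by linarith
    fix n
    show "AE \<omega> in M. nn_cond_exp M (F n) (\<lambda>\<omega>. ennreal (sqnorm_h (M2 n \<omega>))) \<omega>
          \<le> ennreal ((?a + ?b + 1) * (1 + sqnorm_l T (Ql n \<omega>) + sqnorm_h (Qh n \<omega>)))"
    proof (rule cond_bound[OF prob Fsub])
      show "(\<lambda>\<omega>. sqnorm_h (M2 n \<omega>)) \<in> borel_measurable M"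
        unfolding sqnorm_h_def
      proof (rule borel_measurable_sum)
        fix s :: 's
        show "(\<lambda>\<omega>. \<Sum>w\<in>UNIV. (M2 n \<omega> s w)^2) \<in> borel_measurable M"
        proof (rule borel_measurable_sum)
          fix w :: 's
          have "(\<lambda>\<omega>. M2 n \<omega> s w) \<in> borel_measurable M"
            using measurable_from_subalg[OF H_sub] m2[of n s w] by blast
          then show "(\<lambda>\<omega>. (M2 n \<omega> s w)^2) \<in> borel_measurable M" by (rule borel_measurable_power)
        qed
      qed
      show "(\<lambda>\<omega>. (?a + ?b + 1) * (1 + sqnorm_l T (Ql n \<omega>) + sqnorm_h (Qh n \<omega>))) \<in> borel_measurable (F n)"
        by measurable
      show "AE \<omega> in M. sqnorm_h (M2 n \<omega>) \<le> (?a + ?b + 1) * (1 + sqnorm_l T (Ql n \<omega>) + sqnorm_h (Qh n \<omega>))"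
      proof (rule AE_I2)
        fix \<omega>
        have "sqnorm_h (M2 n \<omega>) \<le> (\<Sum>s\<in>(UNIV :: 's set). \<Sum>w\<in>(UNIV :: 's set). A2 * sqnorm_h (Qh n \<omega>) + B2)"
          unfolding sqnorm_h_def[of "M2 n \<omega>"] using m2 by (intro sum_mono) blast
        also have "\<dots> = ?a * sqnorm_h (Qh n \<omega>) + ?b" by (simp add: algebra_simps)
        also have "\<dots> \<le> (?a + ?b + 1) * (1 + sqnorm_l T (Ql n \<omega>) + sqnorm_h (Qh n \<omega>))"
          by (rule lin_bound[OF a0 b0 sqnorm_l_nonneg sqnorm_h_nonneg])
        finally show "sqnorm_h (M2 n \<omega>) \<le> (?a + ?b + 1) * (1 + sqnorm_l T (Ql n \<omega>) + sqnorm_h (Qh n \<omega>))" .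
      qed
    qed
  qed
  show ?thesis using part1 part2 part3 part4 part5 by blast
qed


end
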